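(* Let $\Omega\subset\mathbb{R}^n$ be an open bounded connected domain. Assume there exists a web viscosity solution $u$ to the Dirichlet problem $$-\Delta_\infty u=1\ \text{in }\Omega,\qquad u=0\ \text{on }\partial\Omega.$$ Then $u=\phi_\Omega$, where $\phi_\Omega(x)=c_0\left[\rho_\Omega^{4/3}-(\rho_\Omega-d_{\partial\Omega}(x))^{4/3}\right]$ with $c_0=3^{4/3}/4$, and $\operatorname{Cut}(\Omega)=M(\Omega)$.
   Context: $d_{\partial\Omega}(x)=\min_{y\in\partial\Omega}|x-y|$; $\rho_\Omega=\max_{\overline\Omega}d_{\partial\Omega}$. $\Sigma(\Omega)$ is the set of points of $\Omega$ where $d_{\partial\Omega}$ is not differentiable; $\operatorname{Cut}(\Omega)=\overline{\Sigma(\Omega)}$; $M(\Omega)=\{x\in\overline\Omega:d_{\partial\Omega}(x)=\rho_\Omega\}$. A web function is a function of the form $u(x)=f(d_{\partial\Omega}(x))$ with $f:[0,\rho_\Omega]\to\mathbb{R}$ continuous. $\Delta_\infty\varphi=\langle D^2\varphi\,\nabla\varphi,\nabla\varphi\rangle$. A viscosity solution of the Dirichlet problem is $u\in C^0(\overline\Omega)$ with $u=0$ on $\partial\Omega$ such that: whenever $\varphi\in C^2(\Omega)$ and $\varphi-u$ has a local minimum at $x_0\in\Omega$, then $-\Delta_\infty\varphi(x_0)\le1$; and whenever $\varphi\in C^2(\Omega)$ and $\varphi-u$ has a local maximum at $x_0\in\Omega$, then $-\Delta_\infty\varphi(x_0)\ge1$. *)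

theory Defs
  imports "HOL-Analysis.Analysis"
begin

definition dist_bd :: "'a::euclidean_space set \<Rightarrow> 'a \<Rightarrow> real" where
  "dist_bd \<Omega> x = infdist x (frontier \<Omega>)"

definition inradius :: "'a::euclidean_space set \<Rightarrow> real" where
  "inradius \<Omega> = (SUP x\<in>closure \<Omega>. dist_bd \<Omega> x)"

definition singular_set :: "'a::euclidean_space set \<Rightarrow> 'a set" where
  "singular_set \<Omega> = {x\<in>\<Omega>. \<not> (dist_bd \<Omega> differentiable (at x))}"

definition cut_locus :: "'a::euclidean_space set \<Rightarrow> 'a set" where
  "cut_locus \<Omega> = closure (singular_set \<Omega>)"

definition high_ridge :: "'a::euclidean_space set \<Rightarrow> 'a set" where
  "high_ridge \<Omega> = {x\<in>closure \<Omega>. dist_bd \<Omega> x = inradius \<Omega>}"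

definition web_function :: "'a::euclidean_space set \<Rightarrow> ('a \<Rightarrow> real) \<Rightarrow> bool" where
  "web_function \<Omega> u \<longleftrightarrow>
     (\<exists>f. continuous_on {0..inradius \<Omega>} f \<and> (\<forall>x\<in>closure \<Omega>. u x = f (dist_bd \<Omega> x)))"

definition grad :: "('a::euclidean_space \<Rightarrow> real) \<Rightarrow> 'a \<Rightarrow> 'a" where
  "grad \<phi> x = (\<Sum>b\<in>Basis. frechet_derivative \<phi> (at x) b *\<^sub>R b)"

definition inf_laplacian :: "('a::euclidean_space \<Rightarrow> real) \<Rightarrow> 'a \<Rightarrow> real" where
  "inf_laplacian \<phi> x = frechet_derivative (grad \<phi>) (at x) (grad \<phi> x) \<bullet> grad \<phi> x"

definition C2_on :: "'a::euclidean_space set \<Rightarrow> ('a \<Rightarrow> real) \<Rightarrow> bool" where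
  "C2_on S \<phi> \<longleftrightarrow>
     (\<forall>x\<in>S. \<phi> differentiable (at x)) \<and>
     (\<forall>x\<in>S. grad \<phi> differentiable (at x)) \<and>
     (\<forall>h. continuous_on S (\<lambda>x. frechet_derivative (grad \<phi>) (at x) h))"

definition local_min_at :: "'a::euclidean_space set \<Rightarrow> ('a \<Rightarrow> real) \<Rightarrow> 'a \<Rightarrow> bool" where
  "local_min_at S g x0 \<longleftrightarrow> (\<exists>e>0. \<forall>y\<in>S \<inter> ball x0 e. g x0 \<le> g y)"

definition local_max_at :: "'a::euclidean_space set \<Rightarrow> ('a \<Rightarrow> real) \<Rightarrow> 'a \<Rightarrow> bool" where
  "local_max_at S g x0 \<longleftrightarrow> (\<exists>e>0. \<forall>y\<in>S \<inter> ball x0 e. g y \<le> g x0)"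

definition viscosity_solution :: "'a::euclidean_space set \<Rightarrow> ('a \<Rightarrow> real) \<Rightarrow> bool" where
  "viscosity_solution \<Omega> u \<longleftrightarrow>
     continuous_on (closure \<Omega>) u \<and> (\<forall>x\<in>frontier \<Omega>. u x = 0) \<and>
     (\<forall>\<phi> x0. C2_on \<Omega> \<phi> \<and> x0 \<in> \<Omega> \<and> local_min_at \<Omega> (\<lambda>x. \<phi> x - u x) x0
         \<longrightarrow> - inf_laplacian \<phi> x0 \<le> 1) \<and>
     (\<forall>\<phi> x0. C2_on \<Omega> \<phi> \<and> x0 \<in> \<Omega> \<and> local_max_at \<Omega> (\<lambda>x. \<phi> x - u x) x0
         \<longrightarrow> - inf_laplacian \<phi> x0 \<ge> 1)"

definition phi_Omega :: "'a::euclidean_space set \<Rightarrow> 'a \<Rightarrow> real" where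
  "phi_Omega \<Omega> x = (3 powr (4/3) / 4) *
     (inradius \<Omega> powr (4/3) - (inradius \<Omega> - dist_bd \<Omega> x) powr (4/3))"

end

theory Submission
  imports Defs
begin

lemma grad_eq:
  fixes \<phi> :: "'a::euclidean_space \<Rightarrow> real"
  assumes "(\<phi> has_derivative (\<lambda>v. G \<bullet> v)) (at x)"
  shows "grad \<phi> x = G"
proof -
  have "frechet_derivative \<phi> (at x) = (\<lambda>v. G \<bullet> v)"
    using frechet_derivative_at[OF assms] by simp
  then show ?thesis unfolding grad_def
    by (simp add: euclidean_representation)
qed

lemma C2_explicit:
  fixes \<phi> :: "'a::euclidean_space \<Rightarrow> real"
  assumes d1: "\<And>x. (\<phi> has_derivative (\<lambda>v. G x \<bullet> v)) (at x)"
    and d2: "\<And>x. (G has_derivative H x) (at x)"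
    and c: "\<And>v. continuous_on S (\<lambda>x. H x v)"
  shows "C2_on S \<phi>" "inf_laplacian \<phi> x = H x (G x) \<bullet> G x"
proof -
  have g: "grad \<phi> = G" using grad_eq[OF d1] by auto
  have h: "frechet_derivative G (at x) = H x" for x
    using frechet_derivative_at[OF d2] by simp
  show "C2_on S \<phi>" unfolding C2_on_def g h
    using d1 d2 c unfolding differentiable_def by blast
  show "inf_laplacian \<phi> x = H x (G x) \<bullet> G x" unfolding inf_laplacian_def g h ..
qed

lemma tf_deriv:
  fixes x0 p a1 a2 a3 :: "'a::euclidean_space" and t0 al b1 b2 b3 :: real
  defines "Psi \<equiv> \<lambda>x. t0 + p \<bullet> (x - x0) + al * ((x-x0)\<bullet>(x-x0)) + b1 * (a1\<bullet>(x-x0))^2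
      + b2*(a2\<bullet>(x-x0))^2 + b3*(a3\<bullet>(x-x0))^2"
  defines "GP \<equiv> \<lambda>x. p + (2*al) *\<^sub>R (x-x0) + (2*b1*(a1\<bullet>(x-x0))) *\<^sub>R a1
      + (2*b2*(a2\<bullet>(x-x0))) *\<^sub>R a2 + (2*b3*(a3\<bullet>(x-x0))) *\<^sub>R a3"
  defines "HP \<equiv> \<lambda>v. (2*al) *\<^sub>R v + (2*b1*(a1\<bullet>v)) *\<^sub>R a1
      + (2*b2*(a2\<bullet>v)) *\<^sub>R a2 + (2*b3*(a3\<bullet>v)) *\<^sub>R a3"
  shows "(Psi has_derivative (\<lambda>v. GP x \<bullet> v)) (at x)"
    "(GP has_derivative HP) (at x)"
proof -
  show "(Psi has_derivative (\<lambda>v. GP x \<bullet> v)) (at x)"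
    unfolding Psi_def GP_def
    apply (rule has_derivative_eq_rhs)
     apply (rule derivative_eq_intros | simp)+
    apply (rule ext)
    apply (simp add: algebra_simps inner_add_left inner_add_right power2_eq_square inner_commute)
    done
  show "(GP has_derivative HP) (at x)"
    unfolding HP_def GP_def
    apply (rule has_derivative_eq_rhs)
     apply (rule derivative_eq_intros | simp)+
    done
qed

lemma tf_main:
  fixes xz p aa ab ac :: "'a::euclidean_space" and tz al ba bb bc A B Cc :: real
  defines "Psi \<equiv> \<lambda>x. tz + p \<bullet> (x - xz) + al * ((x-xz)\<bullet>(x-xz)) + ba * (aa\<bullet>(x-xz))^2
      + bb*(ab\<bullet>(x-xz))^2 + bc*(ac\<bullet>(x-xz))^2"
  defines "phi \<equiv> \<lambda>x. A + B*(Psi x - tz) + Cc*(Psi x - tz)^2"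
  shows "C2_on S phi"
    "inf_laplacian phi xz = 2*Cc*B^2*(p\<bullet>p)^2
        + B^3*(2*al*(p\<bullet>p) + 2*ba*(aa\<bullet>p)^2 + 2*bb*(ab\<bullet>p)^2 + 2*bc*(ac\<bullet>p)^2)"
    "phi xz = A" "Psi xz = tz"
proof -
  define GP where "GP \<equiv> \<lambda>x. p + (2*al) *\<^sub>R (x-xz) + (2*ba*(aa\<bullet>(x-xz))) *\<^sub>R aa
      + (2*bb*(ab\<bullet>(x-xz))) *\<^sub>R ab + (2*bc*(ac\<bullet>(x-xz))) *\<^sub>R ac"
  define HP where "HP \<equiv> \<lambda>v. (2*al) *\<^sub>R v + (2*ba*(aa\<bullet>v)) *\<^sub>R aa
      + (2*bb*(ab\<bullet>v)) *\<^sub>R ab + (2*bc*(ac\<bullet>v)) *\<^sub>R ac"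
  have dP: "(Psi has_derivative (\<lambda>v. GP x \<bullet> v)) (at x)" for x
    unfolding Psi_def GP_def by (rule tf_deriv)
  have dG: "(GP has_derivative HP) (at x)" for x
    unfolding HP_def GP_def by (rule tf_deriv)
  define G where "G \<equiv> \<lambda>x. (B + 2*Cc*(Psi x - tz)) *\<^sub>R GP x"
  define H where "H \<equiv> \<lambda>x v. (2*Cc*(GP x \<bullet> v)) *\<^sub>R GP x + (B + 2*Cc*(Psi x - tz)) *\<^sub>R HP v"
  have d1: "(phi has_derivative (\<lambda>v. G x \<bullet> v)) (at x)" for x
    unfolding phi_def G_def
    apply (rule has_derivative_eq_rhs)
     apply (rule derivative_eq_intros dP | simp)+
    apply (rule ext)
    apply (simp add: algebra_simps inner_add_left inner_add_right power2_eq_square)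
    done
  have d2: "(G has_derivative H x) (at x)" for x
    unfolding H_def G_def
    apply (rule has_derivative_eq_rhs)
     apply (rule derivative_eq_intros dP dG | simp)+
    apply (rule ext)
    apply (simp add: algebra_simps inner_add_left inner_add_right)
    done
  have cP: "continuous_on S Psi" unfolding Psi_def by (intro continuous_intros)
  have c: "continuous_on S (\<lambda>x. H x v)" for v
    unfolding H_def GP_def by (intro continuous_intros cP)
  show "C2_on S phi" by (rule C2_explicit(1)[OF d1 d2 c])
  have P0: "Psi xz = tz" unfolding Psi_def by simp
  then show "Psi xz = tz" .
  show "phi xz = A" unfolding phi_def P0 by simp
  have "inf_laplacian phi xz = H xz (G xz) \<bullet> G xz" by (rule C2_explicit(2)[OF d1 d2 c])
  also have "\<dots> = 2*Cc*B^2*(p\<bullet>p)^2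
        + B^3*(2*al*(p\<bullet>p) + 2*ba*(aa\<bullet>p)^2 + 2*bb*(ab\<bullet>p)^2 + 2*bc*(ac\<bullet>p)^2)"
    unfolding H_def G_def GP_def HP_def P0
    by (simp add: algebra_simps inner_add_left inner_add_right power2_eq_square power3_eq_cube inner_commute)
  finally show "inf_laplacian phi xz = 2*Cc*B^2*(p\<bullet>p)^2
        + B^3*(2*al*(p\<bullet>p) + 2*ba*(aa\<bullet>p)^2 + 2*bb*(ab\<bullet>p)^2 + 2*bc*(ac\<bullet>p)^2)" .
qed

locale dom =
  fixes \<Omega> :: "'a::euclidean_space set"
  assumes op: "open \<Omega>" and bd: "bounded \<Omega>" and ne: "\<Omega> \<noteq> {}"
begin

abbreviation "F \<equiv> frontier \<Omega>"
abbreviation "d \<equiv> dist_bd \<Omega>"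
abbreviation "\<rho> \<equiv> inradius \<Omega>"

lemma F_ne: "F \<noteq> {}"
proof
  assume "F = {}"
  then have "\<Omega> = UNIV" using ne frontier_eq_empty by blast
  then show False using bd by simp
qed

lemma F_compact: "compact F" using bd by blast
lemma F_closed: "closed F" by simp

lemma F_disj: "x \<in> \<Omega> \<Longrightarrow> x \<notin> F"
  using op by (simp add: frontier_def interior_open)

lemma cl_eq: "closure \<Omega> = \<Omega> \<union> F" by (rule closure_Un_frontier)

lemma F_cl: "F \<subseteq> closure \<Omega>" using cl_eq by blast

lemma d_def': "d x = infdist x F" by (simp add: dist_bd_def)

lemma d_nonneg: "0 \<le> d x" by (simp add: d_def' infdist_nonneg)

lemma d_le: "y \<in> F \<Longrightarrow> d x \<le> dist x y" by (simp add: d_def' infdist_le)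

lemma d_tri: "d x \<le> d z + dist x z" by (simp add: d_def' infdist_triangle)

lemma d_zero: "y \<in> F \<Longrightarrow> d y = 0" by (simp add: d_def')

lemma d_cont: "continuous_on S d"
  unfolding dist_bd_def by (intro continuous_intros)

lemma d_contat: "continuous (at x) d"
  unfolding dist_bd_def by (intro continuous_intros)

lemma d_pos: "x \<in> \<Omega> \<Longrightarrow> 0 < d x"
  unfolding d_def' using infdist_pos_not_in_closed[OF F_closed F_ne] F_disj by blast

lemma nearest: obtains y where "y \<in> F" "dist x y = d x"
  using infdist_attains_inf[OF F_closed F_ne, of x] unfolding d_def' by metis

lemma ball_sub: assumes "x \<in> \<Omega>" shows "ball x (d x) \<subseteq> \<Omega>"
proof
  fix z assume z: "z \<in> ball x (d x)"
  show "z \<in> \<Omega>"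
  proof (rule ccontr)
    assume "z \<notin> \<Omega>"
    then have "closed_segment x z \<inter> F \<noteq> {}"
      using connected_Int_frontier[of "closed_segment x z" \<Omega>] assms by auto
    then obtain b where b: "b \<in> closed_segment x z" "b \<in> F" by blast
    have "dist x b \<le> dist x z" using b(1)
      by (metis dist_commute dist_in_closed_segment)
    then have "d x \<le> dist x z" using d_le[OF b(2), of x] by linarith
    with z show False by (simp add: dist_commute)
  qed
qed

lemma cl_compact: "compact (closure \<Omega>)" using bd compact_closure by blast

lemma rho_max: obtains xb where "xb \<in> \<Omega>" "d xb = \<rho>" "\<And>x. x \<in> closure \<Omega> \<Longrightarrow> d x \<le> \<rho>" "0 < \<rho>"
proof -
  obtain xb where xb: "xb \<in> closure \<Omega>" "\<And>y. y \<in> closure \<Omega> \<Longrightarrow> d y \<le> d xb"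
    using continuous_attains_sup[OF cl_compact _ d_cont] ne by (metis closure_eq_empty)
  have r: "\<rho> = d xb" unfolding inradius_def
    by (rule cSup_eq_maximum) (use xb in auto)
  obtain x0 where "x0 \<in> \<Omega>" using ne by blast
  then have "0 < d x0" "x0 \<in> closure \<Omega>" using d_pos closure_subset by auto
  then have pos: "0 < d xb" using xb(2) by force
  then have "xb \<in> \<Omega>" using xb(1) cl_eq d_zero by fastforce
  then show ?thesis using that r xb pos by auto
qed

lemma rho_pos: "0 < \<rho>" using rho_max by metis

lemma d_le_rho: "x \<in> closure \<Omega> \<Longrightarrow> d x \<le> \<rho>" using rho_max by metis

end

lemma norm_quad_bound:
  fixes e w :: "'a::euclidean_space"
  assumes e: "norm e = 1" and c: "0 < c" and w: "norm w \<le> c/2"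
  shows "norm (c *\<^sub>R e + w) \<le> c + e \<bullet> w + (w \<bullet> w - (e \<bullet> w)^2) / c"
proof -
  define a where "a = c + e \<bullet> w"
  define \<beta> where "\<beta> = w \<bullet> w - (e \<bullet> w)^2"
  have ew: "\<bar>e \<bullet> w\<bar> \<le> norm w" using Cauchy_Schwarz_ineq2[of e w] e by simp
  have a: "c/2 \<le> a" using ew w unfolding a_def by linarith
  have "(e \<bullet> w)^2 \<le> (norm w)^2" using ew
    by (metis abs_ge_zero power2_abs power_mono)
  then have b: "0 \<le> \<beta>" unfolding \<beta>_def by (simp add: power2_norm_eq_inner)
  have ee: "e \<bullet> e = 1" using e by (simp add: norm_eq_1)
  have sq: "(c *\<^sub>R e + w) \<bullet> (c *\<^sub>R e + w) = a^2 + \<beta>"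
    unfolding a_def \<beta>_def by (simp add: inner_add_left inner_add_right ee inner_commute power2_eq_square algebra_simps)
  have "\<beta>/(2*a) \<le> \<beta>/c" using a b c by (intro divide_left_mono) auto
  have "a^2 + \<beta> \<le> (a + \<beta>/(2*a))^2" using a c b
    by (simp add: power2_eq_square field_simps)
  also have "\<dots> \<le> (a + \<beta>/c)^2"
    using \<open>\<beta>/(2*a) \<le> \<beta>/c\<close> a c b by (intro power_mono) auto
  finally have "(c *\<^sub>R e + w) \<bullet> (c *\<^sub>R e + w) \<le> (a + \<beta>/c)^2" using sq by simp
  moreover have "0 \<le> a + \<beta>/c" using a b c by simp
  ultimately show ?thesis unfolding a_def \<beta>_def[symmetric]
    using norm_le_square by blast
qed

lemma beta_bound:
  fixes e w :: "'a::euclidean_space"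
  assumes e: "norm e = 1" and c: "0 < c" and w: "norm w \<le> c/2"
  shows "\<bar>e \<bullet> w\<bar> \<le> norm w" "0 \<le> (w \<bullet> w - (e \<bullet> w)^2) / c" "(w \<bullet> w - (e \<bullet> w)^2) / c \<le> norm w"
proof -
  show ew: "\<bar>e \<bullet> w\<bar> \<le> norm w" using Cauchy_Schwarz_ineq2[of e w] e by simp
  have "(e \<bullet> w)^2 \<le> (norm w)^2" using ew
    by (metis abs_ge_zero power2_abs power_mono)
  then have b: "0 \<le> w \<bullet> w - (e \<bullet> w)^2" by (simp add: power2_norm_eq_inner)
  then show "0 \<le> (w \<bullet> w - (e \<bullet> w)^2) / c" using c by simp
  have "w \<bullet> w - (e \<bullet> w)^2 \<le> norm w * norm w"
    by (simp add: power2_norm_eq_inner[symmetric] power2_eq_square)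
  also have "\<dots> \<le> norm w * (c/2)" using w by (intro mult_left_mono) auto
  finally have "w \<bullet> w - (e \<bullet> w)^2 \<le> norm w / 2 * c" by simp
  then have "(w \<bullet> w - (e \<bullet> w)^2) / c \<le> norm w / 2" using c by (simp add: divide_le_eq)
  then show "(w \<bullet> w - (e \<bullet> w)^2) / c \<le> norm w" using norm_ge_zero[of w] by linarith
qed

lemma mono_quad:
  fixes B Cc q s t0 :: real
  assumes "0 < B" "\<bar>Cc\<bar>*(\<bar>q - t0\<bar> + \<bar>s - t0\<bar>) \<le> B" "s \<le> q"
  shows "B*(s-t0) + Cc*(s-t0)^2 \<le> B*(q-t0) + Cc*(q-t0)^2"
proof -
  have "\<bar>Cc*(q+s-2*t0)\<bar> \<le> \<bar>Cc\<bar>*(\<bar>q - t0\<bar> + \<bar>s - t0\<bar>)"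
    unfolding abs_mult by (intro mult_left_mono) auto
  then have "Cc*(q+s-2*t0) \<ge> - (\<bar>Cc\<bar>*(\<bar>q - t0\<bar> + \<bar>s - t0\<bar>))" by linarith
  then have "0 \<le> (q - s) * (B + Cc*(q+s-2*t0))" using assms by simp
  moreover have "B*(q-t0) + Cc*(q-t0)^2 - (B*(s-t0) + Cc*(s-t0)^2) = (q - s) * (B + Cc*(q+s-2*t0))"
    by (simp add: power2_eq_square algebra_simps)
  ultimately show ?thesis by linarith
qed

context dom begin

lemma seg: obtains xb y e where "xb \<in> \<Omega>" "d xb = \<rho>" "y \<in> F" "norm e = 1" "xb = y + \<rho> *\<^sub>R e"
   "\<And>t. 0 \<le> t \<Longrightarrow> t \<le> \<rho> \<Longrightarrow> d (y + t *\<^sub>R e) = t"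
   "\<And>t. 0 < t \<Longrightarrow> t \<le> \<rho> \<Longrightarrow> y + t *\<^sub>R e \<in> \<Omega>"
proof -
  obtain xb where xb: "xb \<in> \<Omega>" "d xb = \<rho>" and r: "0 < \<rho>" using rho_max by metis
  obtain y where y: "y \<in> F" "dist xb y = d xb" using nearest by metis
  define e where "e = (1/\<rho>) *\<^sub>R (xb - y)"
  have ne: "norm e = 1" unfolding e_def using y xb r by (simp add: dist_norm)
  have xe: "xb = y + \<rho> *\<^sub>R e" unfolding e_def using r by simp
  have D: "dist xb (y + t *\<^sub>R e) = \<bar>\<rho> - t\<bar>" for t
    unfolding xe dist_norm using ne by (simp add: algebra_simps flip: scaleR_diff_left)
  have dt: "d (y + t *\<^sub>R e) = t" if "0 \<le> t" "t \<le> \<rho>" for t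
  proof -
    have "d (y + t *\<^sub>R e) \<le> t" using d_le[OF y(1), of "y + t *\<^sub>R e"] ne that by (simp add: dist_norm)
    moreover have "\<rho> \<le> d (y + t *\<^sub>R e) + (\<rho> - t)"
      using d_tri[of xb "y + t *\<^sub>R e"] D[of t] xb that by simp
    ultimately show ?thesis by linarith
  qed
  have om: "y + t *\<^sub>R e \<in> \<Omega>" if "0 < t" "t \<le> \<rho>" for t
    using ball_sub[OF xb(1)] D[of t] that xb(2) by (auto simp: dist_commute)
  show ?thesis using that xb y ne xe dt om by blast
qed

end

locale wsol = dom +
  fixes u :: "'a \<Rightarrow> real" and f :: "real \<Rightarrow> real"
  assumes web: "\<And>x. x \<in> closure \<Omega> \<Longrightarrow> u x = f (d x)"
    and fcont: "continuous_on {0..\<rho>} f"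
    and visc: "viscosity_solution \<Omega> u"
begin

lemma vsub: "C2_on \<Omega> \<phi> \<Longrightarrow> x0 \<in> \<Omega> \<Longrightarrow> local_min_at \<Omega> (\<lambda>x. \<phi> x - u x) x0 \<Longrightarrow> - inf_laplacian \<phi> x0 \<le> 1"
  using visc unfolding viscosity_solution_def by blast

lemma vsup: "C2_on \<Omega> \<phi> \<Longrightarrow> x0 \<in> \<Omega> \<Longrightarrow> local_max_at \<Omega> (\<lambda>x. \<phi> x - u x) x0 \<Longrightarrow> - inf_laplacian \<phi> x0 \<ge> 1"
  using visc unfolding viscosity_solution_def by blast

lemma uF: "y \<in> F \<Longrightarrow> u y = 0"
  using visc unfolding viscosity_solution_def by blast

lemma f0: "f 0 = 0"
proof -
  obtain y where "y \<in> F" using F_ne by blast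
  then show ?thesis using uF web[of y] d_zero F_cl by force
qed

lemma dclose: "\<bar>d x - d z\<bar> \<le> dist x z"
  using d_tri[of x z] d_tri[of z x] by (simp add: dist_commute)

lemma sub1:
  assumes t0: "0 < t0" "t0 \<le> \<rho>" and B: "0 < B" and dl: "0 < \<delta>"
    and le: "\<And>s. 0 \<le> s \<Longrightarrow> s \<le> \<rho> \<Longrightarrow> \<bar>s - t0\<bar> < \<delta> \<Longrightarrow> f s \<le> f t0 + B*(s-t0) + Cc*(s-t0)^2"
  shows "-(2*Cc*B^2) \<le> 1"
proof -
  obtain xb y e where sg: "xb \<in> \<Omega>" "d xb = \<rho>" "y \<in> F" "norm e = 1" "xb = y + \<rho> *\<^sub>R e"
   "\<And>t. 0 \<le> t \<Longrightarrow> t \<le> \<rho> \<Longrightarrow> d (y + t *\<^sub>R e) = t"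
   "\<And>t. 0 < t \<Longrightarrow> t \<le> \<rho> \<Longrightarrow> y + t *\<^sub>R e \<in> \<Omega>" using seg by blast
  define x0 where "x0 = y + t0 *\<^sub>R e"
  have x0: "x0 \<in> \<Omega>" "d x0 = t0" using sg t0 unfolding x0_def by auto
  have ux0: "u x0 = f t0" using web[of x0] x0 closure_subset by auto
  define Psi where "Psi \<equiv> \<lambda>x. t0 + e \<bullet> (x - x0) + (1/t0) * ((x-x0)\<bullet>(x-x0)) + (-1/t0) * (e\<bullet>(x-x0))^2
      + 0*(0\<bullet>(x-x0))^2 + 0*(0\<bullet>(x-x0))^2"
  define phi where "phi \<equiv> \<lambda>x. f t0 + B*(Psi x - t0) + Cc*(Psi x - t0)^2"
  have ee: "e \<bullet> e = 1" using sg(4) by (simp add: norm_eq_1)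
  have C2: "C2_on \<Omega> phi" unfolding phi_def Psi_def by (rule tf_main(1))
  have IL0: "inf_laplacian phi x0 = 2*Cc*B^2*(e\<bullet>e)^2 + B^3*(2*(1/t0)*(e\<bullet>e) + 2*(-1/t0)*(e\<bullet>e)^2
     + 2*0*(0\<bullet>e)^2 + 2*0*(0\<bullet>e)^2)" unfolding phi_def Psi_def by (rule tf_main(2))
  have IL: "inf_laplacian phi x0 = 2*Cc*B^2" using IL0 ee by simp
  have phx0: "phi x0 = f t0" unfolding phi_def Psi_def by simp
  define \<epsilon> where "\<epsilon> = min (t0/2) (min (\<delta>/2) (B/(4*(\<bar>Cc\<bar>+1))))"
  have ep: "0 < \<epsilon>" unfolding \<epsilon>_def using t0 dl B by (simp add: abs_add_one_gt_zero)
  have "local_min_at \<Omega> (\<lambda>x. phi x - u x) x0"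
    unfolding local_min_at_def
  proof (intro exI conjI ballI)
    show "0 < \<epsilon>" by (rule ep)
    fix x assume x: "x \<in> \<Omega> \<inter> ball x0 \<epsilon>"
    define w where "w = x - x0"
    have nw: "norm w < \<epsilon>" using x unfolding w_def by (simp add: dist_norm norm_minus_commute)
    have nw2: "norm w \<le> t0/2" using nw unfolding \<epsilon>_def by linarith
    have nw3: "\<bar>Cc\<bar> * (3 * norm w) \<le> B"
    proof -
      have "norm w \<le> B/(4*(\<bar>Cc\<bar>+1))" using nw unfolding \<epsilon>_def by linarith
      then have "norm w * (4*(\<bar>Cc\<bar>+1)) \<le> B" by (simp add: le_divide_eq abs_add_one_gt_zero)
      moreover have "\<bar>Cc\<bar> * (3 * norm w) \<le> norm w * (4*(\<bar>Cc\<bar>+1))"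
        using mult_nonneg_nonneg[OF abs_ge_zero[of Cc] norm_ge_zero[of w]] norm_ge_zero[of w]
        by (simp add: algebra_simps)
      ultimately show ?thesis by linarith
    qed
    define s where "s = d x"
    define q where "q = Psi x"
    have q: "q = t0 + e \<bullet> w + (w \<bullet> w - (e \<bullet> w)^2)/t0"
      unfolding q_def Psi_def w_def[symmetric] using t0 by (simp add: field_simps)
    have sx: "\<bar>s - t0\<bar> \<le> norm w" using dclose[of x x0] x0 unfolding s_def w_def by (simp add: dist_norm)
    note bb = beta_bound[OF sg(4) t0(1) nw2]
    have qt: "\<bar>q - t0\<bar> \<le> 2 * norm w" using q bb by linarith
    have "x - y = t0 *\<^sub>R e + w" unfolding w_def x0_def by simp
    then have "dist x y \<le> q" using norm_quad_bound[OF sg(4) t0(1) nw2] q by (simp add: dist_norm)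
    then have sq: "s \<le> q" using d_le[OF sg(3), of x] unfolding s_def by linarith
    have xc: "x \<in> closure \<Omega>" using x closure_subset by auto
    have s0: "0 \<le> s" "s \<le> \<rho>" unfolding s_def using d_nonneg d_le_rho[OF xc] by auto
    have "\<bar>s - t0\<bar> < \<delta>" using sx nw unfolding \<epsilon>_def by linarith
    then have "u x \<le> f t0 + B*(s-t0) + Cc*(s-t0)^2" using le[OF s0] web[OF xc] unfolding s_def by simp
    also have "\<dots> \<le> f t0 + B*(q-t0) + Cc*(q-t0)^2"
    proof -
      have "\<bar>Cc\<bar>*(\<bar>q - t0\<bar> + \<bar>s - t0\<bar>) \<le> \<bar>Cc\<bar> * (3*norm w)"
        using qt sx by (intro mult_left_mono) auto
      then show ?thesis using mono_quad[OF B _ sq, of Cc t0] nw3 by linarith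
    qed
    also have "\<dots> = phi x" unfolding phi_def q_def ..
    finally show "phi x0 - u x0 \<le> phi x - u x" using phx0 ux0 by simp
  qed
  from vsub[OF C2 x0(1) this] IL show ?thesis by simp
qed

lemma sup1:
  assumes t0: "0 < t0" "t0 < \<rho>" and B: "0 < B" and dl: "0 < \<delta>"
    and le: "\<And>s. 0 \<le> s \<Longrightarrow> s \<le> \<rho> \<Longrightarrow> \<bar>s - t0\<bar> < \<delta> \<Longrightarrow> f t0 + B*(s-t0) + Cc*(s-t0)^2 \<le> f s"
  shows "-(2*Cc*B^2) \<ge> 1"
proof -
  obtain xb y e where sg: "xb \<in> \<Omega>" "d xb = \<rho>" "y \<in> F" "norm e = 1" "xb = y + \<rho> *\<^sub>R e"
   "\<And>t. 0 \<le> t \<Longrightarrow> t \<le> \<rho> \<Longrightarrow> d (y + t *\<^sub>R e) = t"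
   "\<And>t. 0 < t \<Longrightarrow> t \<le> \<rho> \<Longrightarrow> y + t *\<^sub>R e \<in> \<Omega>" using seg by blast
  define x0 where "x0 = y + t0 *\<^sub>R e"
  define r where "r = \<rho> - t0"
  have r: "0 < r" unfolding r_def using t0 by simp
  have x0: "x0 \<in> \<Omega>" "d x0 = t0" using sg t0 unfolding x0_def by auto
  have ux0: "u x0 = f t0" using web[of x0] x0 closure_subset by auto
  define Psi where "Psi \<equiv> \<lambda>x. t0 + e \<bullet> (x - x0) + (-1/r) * ((x-x0)\<bullet>(x-x0)) + (1/r) * (e\<bullet>(x-x0))^2
      + 0*(0\<bullet>(x-x0))^2 + 0*(0\<bullet>(x-x0))^2"
  define phi where "phi \<equiv> \<lambda>x. f t0 + B*(Psi x - t0) + Cc*(Psi x - t0)^2"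
  have ee: "e \<bullet> e = 1" using sg(4) by (simp add: norm_eq_1)
  have C2: "C2_on \<Omega> phi" unfolding phi_def Psi_def by (rule tf_main(1))
  have IL0: "inf_laplacian phi x0 = 2*Cc*B^2*(e\<bullet>e)^2 + B^3*(2*(-1/r)*(e\<bullet>e) + 2*(1/r)*(e\<bullet>e)^2
     + 2*0*(0\<bullet>e)^2 + 2*0*(0\<bullet>e)^2)" unfolding phi_def Psi_def by (rule tf_main(2))
  have IL: "inf_laplacian phi x0 = 2*Cc*B^2" using IL0 ee by simp
  have phx0: "phi x0 = f t0" unfolding phi_def Psi_def by simp
  define \<epsilon> where "\<epsilon> = min (r/2) (min (\<delta>/2) (B/(4*(\<bar>Cc\<bar>+1))))"
  have ep: "0 < \<epsilon>" unfolding \<epsilon>_def using r dl B by (simp add: abs_add_one_gt_zero)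
  have "local_max_at \<Omega> (\<lambda>x. phi x - u x) x0"
    unfolding local_max_at_def
  proof (intro exI conjI ballI)
    show "0 < \<epsilon>" by (rule ep)
    fix x assume x: "x \<in> \<Omega> \<inter> ball x0 \<epsilon>"
    define w where "w = x - x0"
    have nw: "norm w < \<epsilon>" using x unfolding w_def by (simp add: dist_norm norm_minus_commute)
    have nw2: "norm w \<le> r/2" using nw unfolding \<epsilon>_def by linarith
    have nw3: "\<bar>Cc\<bar> * (3 * norm w) \<le> B"
    proof -
      have "norm w \<le> B/(4*(\<bar>Cc\<bar>+1))" using nw unfolding \<epsilon>_def by linarith
      then have "norm w * (4*(\<bar>Cc\<bar>+1)) \<le> B" by (simp add: le_divide_eq abs_add_one_gt_zero)
      moreover have "\<bar>Cc\<bar> * (3 * norm w) \<le> norm w * (4*(\<bar>Cc\<bar>+1))"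
        using mult_nonneg_nonneg[OF abs_ge_zero[of Cc] norm_ge_zero[of w]] norm_ge_zero[of w]
        by (simp add: algebra_simps)
      ultimately show ?thesis by linarith
    qed
    define s where "s = d x"
    define q where "q = Psi x"
    have q: "q = t0 + e \<bullet> w - (w \<bullet> w - (e \<bullet> w)^2)/r"
      unfolding q_def Psi_def w_def[symmetric] using r by (simp add: field_simps)
    have sx: "\<bar>s - t0\<bar> \<le> norm w" using dclose[of x x0] x0 unfolding s_def w_def by (simp add: dist_norm)
    note bb = beta_bound[OF sg(4) r nw2]
    have qt: "\<bar>q - t0\<bar> \<le> 2 * norm w" using q bb by linarith
    have nw2': "norm (-w) \<le> r/2" using nw2 by simp
    have eqx: "xb - x = r *\<^sub>R e + (-w)" unfolding w_def x0_def r_def sg(5) by (simp add: algebra_simps)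
    have "dist x xb = norm (r *\<^sub>R e + (-w))" unfolding eqx[symmetric] by (simp add: dist_norm norm_minus_commute)
    moreover have "norm (r *\<^sub>R e + (-w)) \<le> r + e \<bullet> (-w) + ((-w) \<bullet> (-w) - (e \<bullet> (-w))^2)/r"
      by (rule norm_quad_bound[OF sg(4) r nw2'])
    ultimately have "dist x xb \<le> r - e \<bullet> w + (w \<bullet> w - (e \<bullet> w)^2)/r" by simp
    moreover have "\<rho> \<le> s + dist x xb" using d_tri[of xb x] sg(2) unfolding s_def by (simp add: dist_commute)
    ultimately have sq: "q \<le> s" using q unfolding r_def by linarith
    have xc: "x \<in> closure \<Omega>" using x closure_subset by auto
    have s0: "0 \<le> s" "s \<le> \<rho>" unfolding s_def using d_nonneg d_le_rho[OF xc] by auto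
    have "\<bar>s - t0\<bar> < \<delta>" using sx nw unfolding \<epsilon>_def by linarith
    then have "f t0 + B*(s-t0) + Cc*(s-t0)^2 \<le> u x" using le[OF s0] web[OF xc] unfolding s_def by simp
    moreover have "f t0 + B*(q-t0) + Cc*(q-t0)^2 \<le> f t0 + B*(s-t0) + Cc*(s-t0)^2"
    proof -
      have "\<bar>Cc\<bar>*(\<bar>s - t0\<bar> + \<bar>q - t0\<bar>) \<le> \<bar>Cc\<bar> * (3*norm w)"
        using qt sx by (intro mult_left_mono) auto
      then show ?thesis using mono_quad[OF B _ sq, of Cc t0] nw3 by linarith
    qed
    moreover have "f t0 + B*(q-t0) + Cc*(q-t0)^2 = phi x" unfolding phi_def q_def ..
    ultimately show "phi x - u x \<le> phi x0 - u x0" using phx0 ux0 by simp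
  qed
  from vsup[OF C2 x0(1) this] IL show ?thesis by simp
qed

lemma C2_const: "C2_on S (\<lambda>x::'a. c)" "inf_laplacian (\<lambda>x::'a. c) x = 0"
proof -
  have d1: "((\<lambda>x::'a. c) has_derivative (\<lambda>v. (\<lambda>x. 0::'a) x \<bullet> v)) (at x)" for x
    by (simp add: has_derivative_const)
  have d2: "((\<lambda>x::'a. 0::'a) has_derivative (\<lambda>x v. 0) x) (at x)" for x
    by (simp add: has_derivative_const)
  have c: "continuous_on S (\<lambda>x::'a. (\<lambda>x v. 0::'a) x v)" for v by simp
  show "C2_on S (\<lambda>x::'a. c)" by (rule C2_explicit(1)[OF d1 d2 c])
  show "inf_laplacian (\<lambda>x::'a. c) x = 0" using C2_explicit(2)[OF d1 d2 c] by simp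
qed

lemma nomin:
  assumes t0: "0 < t0" "t0 \<le> \<rho>" and dl: "0 < \<delta>"
    and le: "\<And>s. 0 \<le> s \<Longrightarrow> s \<le> \<rho> \<Longrightarrow> \<bar>s - t0\<bar> < \<delta> \<Longrightarrow> f t0 \<le> f s"
  shows False
proof -
  obtain xb y e where sg: "xb \<in> \<Omega>" "d xb = \<rho>" "y \<in> F" "norm e = 1" "xb = y + \<rho> *\<^sub>R e"
   "\<And>t. 0 \<le> t \<Longrightarrow> t \<le> \<rho> \<Longrightarrow> d (y + t *\<^sub>R e) = t"
   "\<And>t. 0 < t \<Longrightarrow> t \<le> \<rho> \<Longrightarrow> y + t *\<^sub>R e \<in> \<Omega>" using seg by blast
  define x0 where "x0 = y + t0 *\<^sub>R e"
  have x0: "x0 \<in> \<Omega>" "d x0 = t0" using sg t0 unfolding x0_def by auto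
  have ux0: "u x0 = f t0" using web[of x0] x0 closure_subset by auto
  have "local_max_at \<Omega> (\<lambda>x. f t0 - u x) x0"
    unfolding local_max_at_def
  proof (intro exI conjI ballI)
    show "0 < \<delta>" by (rule dl)
    fix x assume x: "x \<in> \<Omega> \<inter> ball x0 \<delta>"
    have xc: "x \<in> closure \<Omega>" using x closure_subset by auto
    have "\<bar>d x - t0\<bar> < \<delta>" using dclose[of x x0] x0 x by (simp add: dist_commute)
    then have "f t0 \<le> u x" using le[OF d_nonneg d_le_rho[OF xc]] web[OF xc] by simp
    then show "f t0 - u x \<le> f t0 - u x0" using ux0 by simp
  qed
  from vsup[OF C2_const(1) x0(1) this] C2_const(2) show False by simp
qed

end

context dom begin

lemma near_conv:
  assumes y: "y \<in> F" "dist x y = d x" and uq: "\<And>y'. y' \<in> F \<Longrightarrow> dist x y' = d x \<Longrightarrow> y' = y"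
    and eta: "0 < \<eta>"
  shows "\<exists>\<delta>>0. \<forall>z y'. dist z x < \<delta> \<longrightarrow> y' \<in> F \<longrightarrow> dist z y' = d z \<longrightarrow> dist y' y < \<eta>"
proof -
  define K where "K = F \<inter> {y'. \<eta> \<le> dist y' y}"
  have Kc: "closed K" unfolding K_def
    by (intro closed_Int F_closed closed_Collect_le continuous_intros)
  show ?thesis
  proof (cases "K = {}")
    case True
    then show ?thesis unfolding K_def by (intro exI[of _ 1]) (auto simp: not_le)
  next
    case False
    obtain k where k: "k \<in> K" "infdist x K = dist x k" using infdist_attains_inf[OF Kc False] by blast
    define m where "m = dist x k"
    have kF: "k \<in> F" "\<eta> \<le> dist k y" using k unfolding K_def by auto
    have "d x \<le> m" unfolding m_def by (rule d_le[OF kF(1)])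
    moreover have "m \<noteq> d x"
    proof
      assume "m = d x"
      then have "k = y" using uq[OF kF(1)] unfolding m_def by simp
      then show False using kF(2) eta by simp
    qed
    ultimately have mt: "d x < m" by simp
    define \<delta> where "\<delta> = (m - d x)/2"
    have dp: "0 < \<delta>" unfolding \<delta>_def using mt by simp
    show ?thesis
    proof (intro exI[of _ \<delta>] conjI dp allI impI)
      fix z y' assume z: "dist z x < \<delta>" "y' \<in> F" "dist z y' = d z"
      show "dist y' y < \<eta>"
      proof (rule ccontr)
        assume "\<not> dist y' y < \<eta>"
        then have "y' \<in> K" unfolding K_def using z by auto
        then have "m \<le> dist x y'" using k unfolding m_def by (metis infdist_le)
        moreover have "dist x y' \<le> dist x z + dist z y'" by (rule dist_triangle)
        moreover have "d z \<le> d x + dist z x" by (rule d_tri)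
        ultimately show False using z unfolding \<delta>_def by (simp add: dist_commute)
      qed
    qed
  qed
qed

lemma diff_unique:
  assumes x: "x \<in> \<Omega>" and y: "y \<in> F" "dist x y = d x"
    and uq: "\<And>y'. y' \<in> F \<Longrightarrow> dist x y' = d x \<Longrightarrow> y' = y"
  shows "d differentiable (at x)"
proof -
  define t where "t = d x"
  have t: "0 < t" unfolding t_def using d_pos x by simp
  define e where "e = (1/t) *\<^sub>R (x - y)"
  have ne: "norm e = 1" unfolding e_def using y t t_def by (simp add: dist_norm)
  have xy: "x - y = t *\<^sub>R e" unfolding e_def using t by simp
  have "(d has_derivative (\<lambda>v. e \<bullet> v)) (at x)"
    unfolding has_derivative_at_alt
  proof (intro conjI allI impI)
    show "bounded_linear ((\<bullet>) e)" by (rule bounded_linear_inner_right)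
    fix \<epsilon> :: real assume ep: "0 < \<epsilon>"
    obtain \<delta>1 where d1: "0 < \<delta>1" "\<forall>z y'. dist z x < \<delta>1 \<longrightarrow> y' \<in> F \<longrightarrow> dist z y' = d z \<longrightarrow> dist y' y < \<epsilon>*t/2"
      using near_conv[OF y uq, of "\<epsilon>*t/2"] ep t by auto
    define \<delta> where "\<delta> = min \<delta>1 (min (t/2) (\<epsilon>*t))"
    show "\<exists>\<delta>>0. \<forall>z. norm (z - x) < \<delta> \<longrightarrow> norm (d z - d x - e \<bullet> (z - x)) \<le> \<epsilon> * norm (z - x)"
    proof (intro exI[of _ \<delta>] conjI allI impI)
      show "0 < \<delta>" unfolding \<delta>_def using d1 t ep by simp
      fix z assume z: "norm (z - x) < \<delta>"
      define w where "w = z - x"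
      have nw: "norm w \<le> t/2" "norm w \<le> \<epsilon>*t" "dist z x < \<delta>1"
        using z unfolding w_def \<delta>_def by (auto simp: dist_norm)
      have "z - y = t *\<^sub>R e + w" unfolding w_def using xy by (simp add: algebra_simps)
      then have "dist z y \<le> t + e \<bullet> w + (w \<bullet> w - (e \<bullet> w)^2)/t"
        using norm_quad_bound[OF ne t nw(1)] by (simp add: dist_norm)
      moreover have "(w \<bullet> w - (e \<bullet> w)^2)/t \<le> \<epsilon> * norm w"
      proof -
        have "w \<bullet> w - (e \<bullet> w)^2 \<le> norm w * norm w" by (simp add: power2_norm_eq_inner[symmetric] power2_eq_square)
        also have "\<dots> \<le> norm w * (\<epsilon>*t)" using nw(2) by (intro mult_left_mono) auto
        finally show ?thesis using t by (simp add: divide_le_eq algebra_simps)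
      qed
      moreover have "d z \<le> dist z y" by (rule d_le[OF y(1)])
      ultimately have up: "d z - d x - e \<bullet> w \<le> \<epsilon> * norm w" unfolding t_def by linarith
      obtain y' where y': "y' \<in> F" "dist z y' = d z" using nearest by metis
      have yy: "dist y' y < \<epsilon>*t/2" using d1(2) nw(3) y' by blast
      define A where "A = norm (x - y')"
      have A: "t \<le> A" unfolding A_def t_def using d_le[OF y'(1), of x] by (simp add: dist_norm)
      define e' where "e' = (1/A) *\<^sub>R (x - y')"
      have xy': "x \<noteq> y'" using A t unfolding A_def by auto
      have ne': "norm e' = 1" unfolding e'_def A_def using xy' by simp
      have "e' \<bullet> (z - y') \<le> norm (z - y')" using Cauchy_Schwarz_ineq2[of e' "z - y'"] ne' by simp
      moreover have "e' \<bullet> (z - y') = A + e' \<bullet> w"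
      proof -
        have zz: "z - y' = (x - y') + w" unfolding w_def by simp
        have eA: "e' \<bullet> (x - y') = A" unfolding e'_def A_def using A t
          by (simp add: power2_norm_eq_inner[symmetric] power2_eq_square)
        show ?thesis unfolding zz inner_add_right eA ..
      qed
      ultimately have "A + e' \<bullet> w \<le> d z" using y'(2) by (simp add: dist_norm)
      then have lo1: "t + e' \<bullet> w \<le> d z" using A by linarith
      have ee: "norm (e' - e) \<le> \<epsilon>"
      proof -
        have "e' - e = ((1/A) - (1/t)) *\<^sub>R (x - y') + (1/t) *\<^sub>R (y - y')"
          unfolding e'_def e_def by (simp add: algebra_simps)
        then have "norm (e' - e) \<le> norm (((1/A) - (1/t)) *\<^sub>R (x - y')) + norm ((1/t) *\<^sub>R (y - y'))"
          by (metis norm_triangle_ineq)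
        also have "norm (((1/A) - (1/t)) *\<^sub>R (x - y')) = (A - t)/t"
        proof -
          have nA: "norm (x - y') = A" unfolding A_def ..
          have i: "1/A \<le> 1/t" using A t by (simp add: divide_le_eq_1 frac_le)
          have "norm (((1/A) - (1/t)) *\<^sub>R (x - y')) = \<bar>1/A - 1/t\<bar> * A" using nA by simp
          also have "\<bar>1/A - 1/t\<bar> = 1/t - 1/A" using i by simp
          also have "(1/t - 1/A) * A = (A - t)/t" using A t by (simp add: field_simps)
          finally show ?thesis .
        qed
        also have "norm ((1/t) *\<^sub>R (y - y')) = dist y' y / t" using t by (simp add: dist_norm norm_minus_commute)
        finally have h0: "norm (e' - e) \<le> (A - t)/t + dist y' y / t" .
        have "A - t \<le> dist y' y"
        proof -
          have "A \<le> norm (x - y) + norm (y - y')" unfolding A_def using norm_triangle_ineq[of "x - y" "y - y'"] by simp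
          then show ?thesis using y(2) unfolding t_def by (simp add: dist_norm norm_minus_commute)
        qed
        then have h1: "(A - t)/t \<le> dist y' y / t" using t by (simp add: divide_right_mono)
        have h2: "2 * (dist y' y / t) \<le> \<epsilon>" using yy t by (simp add: field_simps)
        show ?thesis using h0 h1 h2 by linarith
      qed
      have "(e' - e) \<bullet> w \<ge> - (\<epsilon> * norm w)"
      proof -
        have "\<bar>(e' - e) \<bullet> w\<bar> \<le> norm (e' - e) * norm w" by (rule Cauchy_Schwarz_ineq2)
        also have "\<dots> \<le> \<epsilon> * norm w" using ee by (intro mult_right_mono) auto
        finally show ?thesis by linarith
      qed
      then have lo: "d z - d x - e \<bullet> w \<ge> - (\<epsilon> * norm w)" using lo1 unfolding t_def by (simp add: inner_diff_left)
      show "norm (d z - d x - e \<bullet> (z - x)) \<le> \<epsilon> * norm (z - x)" using up lo unfolding w_def real_norm_def by linarith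
    qed
  qed
  then show ?thesis unfolding differentiable_def by blast
qed

end

lemma min_combo: "min (Q1::real) Q2 \<le> (3/4)*Q1 + (1/4)*Q2 - \<bar>Q1 - Q2\<bar>/4"
  by (simp add: min_def abs_if field_simps)

context dom begin

lemma seg_gen:
  assumes x: "0 < d x" and y: "y \<in> F" "dist x y = d x"
  defines "e \<equiv> (1/d x) *\<^sub>R (x - y)"
  shows "norm e = 1" "x = y + d x *\<^sub>R e" "\<And>t. 0 \<le> t \<Longrightarrow> t \<le> d x \<Longrightarrow> d (y + t *\<^sub>R e) = t"
proof -
  show ne: "norm e = 1" unfolding e_def using x y by (simp add: dist_norm)
  show xe: "x = y + d x *\<^sub>R e" unfolding e_def using x by simp
  have D: "dist x (y + t *\<^sub>R e) = \<bar>d x - t\<bar>" for t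
    using ne by (subst xe) (simp add: dist_norm algebra_simps flip: scaleR_diff_left)
  fix t assume t: "0 \<le> t" "t \<le> d x"
  have "d (y + t *\<^sub>R e) \<le> t" using d_le[OF y(1), of "y + t *\<^sub>R e"] ne t by (simp add: dist_norm)
  moreover have "d x \<le> d (y + t *\<^sub>R e) + (d x - t)"
    using d_tri[of x "y + t *\<^sub>R e"] D[of t] t by simp
  ultimately show "d (y + t *\<^sub>R e) = t" by linarith
qed

lemma ridge_sing:
  assumes xc: "x \<in> closure \<Omega>" and dx: "d x = \<rho>"
  shows "x \<in> \<Omega>" "\<not> d differentiable (at x)"
proof -
  have dp: "0 < d x" using dx rho_pos by simp
  then show xo: "x \<in> \<Omega>" using xc cl_eq d_zero by fastforce
  obtain y where y: "y \<in> F" "dist x y = d x" using nearest by metis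
  define e where "e = (1/d x) *\<^sub>R (x - y)"
  note sg = seg_gen[OF dp y, folded e_def]
  show "\<not> d differentiable (at x)"
  proof
    assume "d differentiable (at x)"
    then obtain D where D: "(d has_derivative D) (at x)" unfolding differentiable_def by blast
    define g where "g s = d (x + s *\<^sub>R e)" for s
    have l: "((\<lambda>s::real. s *\<^sub>R e) has_derivative (\<lambda>s. s *\<^sub>R e)) (at 0)"
      by (rule bounded_linear_imp_has_derivative[OF bounded_linear_scaleR_left])
    have "((\<lambda>s. x + s *\<^sub>R e) has_derivative (\<lambda>s. 0 + s *\<^sub>R e)) (at 0)"
      by (intro has_derivative_add has_derivative_const l)
    then have "((\<lambda>s. x + s *\<^sub>R e) has_derivative (\<lambda>s. s *\<^sub>R e)) (at 0)" by simp
    then have "(g has_derivative (\<lambda>s. D (s *\<^sub>R e))) (at 0)"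
      unfolding g_def using has_derivative_compose[of "\<lambda>s. x + s *\<^sub>R e" _ 0 UNIV d D] D by simp
    then have gd: "(g has_real_derivative D e) (at 0)"
      using has_derivative_imp_has_field_derivative[of g "\<lambda>s. D (s *\<^sub>R e)"]
      by (metis D has_derivative_bounded_linear linear_simps(5) mult.commute real_scaleR_def)
    have "D e = 0"
    proof (rule DERIV_local_max[OF gd, of "d x"])
      show "0 < d x" by (rule dp)
      show "\<forall>y. \<bar>0 - y\<bar> < d x \<longrightarrow> g y \<le> g 0"
      proof (intro allI impI)
        fix s assume s: "\<bar>0 - s\<bar> < d x"
        have "x + s *\<^sub>R e \<in> ball x (d x)" using s sg(1) by (simp add: dist_norm)
        then have "x + s *\<^sub>R e \<in> closure \<Omega>" using ball_sub[OF xo] closure_subset by blast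
        then show "g s \<le> g 0" unfolding g_def using d_le_rho dx by simp
      qed
    qed
    define k where "k s = g s - s" for s
    have kd: "(k has_real_derivative (D e - 1)) (at 0)" unfolding k_def
      by (rule derivative_intros gd)+
    obtain h0 where h0: "0 < h0" "\<And>h. 0 < h \<Longrightarrow> h < h0 \<Longrightarrow> k 0 < k (0 - h)"
      using DERIV_neg_dec_left[OF kd] \<open>D e = 0\<close> by auto
    define h where "h = min (h0/2) (d x)"
    have hp: "0 < h" "h < h0" "h \<le> d x" unfolding h_def using h0 dp by auto
    have "x + (-h) *\<^sub>R e = y + (d x - h) *\<^sub>R e" using sg(2) by (simp add: algebra_simps)
    then have "g (-h) = d x - h" unfolding g_def using sg(3)[of "d x - h"] hp by simp
    moreover have "g 0 = d x" unfolding g_def by simp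
    ultimately show False using h0(2)[OF hp(1,2)] unfolding k_def by simp
  qed
qed

end

lemma alg2: "t \<noteq> 0 \<Longrightarrow> (t::real) + (3/4*a + 1/4*b) + 1/t*W + (-(3/4)/t)*a^2 + (-(1/4)/t)*b^2 + (-K)*c^2
   = 3/4*(t + a + (W - a^2)/t) + 1/4*(t + b + (W - b^2)/t) - K*c^2"
  by (simp add: field_simps)
lemma alg3: "0 < t \<Longrightarrow> \<bar>X\<bar> \<le> t/2 \<Longrightarrow> \<bar>(X::real)/t\<bar> \<le> 1/2"
  by (simp add: abs_divide divide_le_eq)
lemma alg4: "t \<noteq> 0 \<Longrightarrow> (t::real) + a + (W - a^2)/t - (t + b + (W - b^2)/t) = (a - b)*(1 - (a+b)/t)"
  by (simp add: field_simps power2_eq_square)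

context wsol begin

lemma two_pt:
  assumes x: "x \<in> \<Omega>" and y1: "y1 \<in> F" "dist x y1 = d x" and y2: "y2 \<in> F" "dist x y2 = d x"
    and yne: "y1 \<noteq> y2" and B: "0 < B" and d0: "0 < \<delta>0"
    and tan: "\<And>s. 0 \<le> s \<Longrightarrow> s \<le> \<rho> \<Longrightarrow> \<bar>s - d x\<bar> < \<delta>0 \<Longrightarrow> f s \<le> f (d x) + B*(s - d x)"
  shows False
proof -
  define t where "t = d x"
  have t: "0 < t" unfolding t_def using d_pos x by simp
  define e1 where "e1 = (1/t) *\<^sub>R (x - y1)"
  define e2 where "e2 = (1/t) *\<^sub>R (x - y2)"
  have n1: "norm e1 = 1" unfolding e1_def using y1 t t_def by (simp add: dist_norm)
  have n2: "norm e2 = 1" unfolding e2_def using y2 t t_def by (simp add: dist_norm)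
  have x1: "x - y1 = t *\<^sub>R e1" unfolding e1_def using t by simp
  have x2: "x - y2 = t *\<^sub>R e2" unfolding e2_def using t by simp
  have ene: "e1 \<noteq> e2"
  proof
    assume "e1 = e2"
    then have "x - y1 = x - y2" using x1 x2 by simp
    then show False using yne by simp
  qed
  define v where "v = e1 - e2"
  define p where "p = (3/4) *\<^sub>R e1 + (1/4) *\<^sub>R e2"
  have e11: "e1 \<bullet> e1 = 1" using n1 by (simp add: norm_eq_1)
  have e22: "e2 \<bullet> e2 = 1" using n2 by (simp add: norm_eq_1)
  have va: "v \<bullet> e1 = 1 - e1 \<bullet> e2" unfolding v_def by (simp add: inner_diff_left e11 inner_commute[of e2 e1])
  have vb: "v \<bullet> e2 = e1 \<bullet> e2 - 1" unfolding v_def by (simp add: inner_diff_left e22)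
  have "v \<bullet> p = (3/4)*(v \<bullet> e1) + (1/4)*(v \<bullet> e2)" unfolding p_def by (simp add: inner_add_right)
  then have vp: "v \<bullet> p = (1 - e1 \<bullet> e2)/2" unfolding va vb by (simp add: field_simps)
  have "0 < norm v" using ene unfolding v_def by simp
  then have "0 < v \<bullet> v" by simp
  moreover have "v \<bullet> v = 2 - 2 * (e1 \<bullet> e2)"
    unfolding v_def by (simp add: inner_diff_left inner_diff_right e11 e22 inner_commute)
  ultimately have vp0: "v \<bullet> p \<noteq> 0" using vp by simp
  have nv: "norm v \<le> 2" unfolding v_def using norm_triangle_ineq4[of e1 e2] n1 n2 by simp
  define Z where "Z = 2*(1/t)*(p\<bullet>p) + 2*(-(3/4)/t)*(e1\<bullet>p)^2 + 2*(-(1/4)/t)*(e2\<bullet>p)^2"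
  define K where "K = (\<bar>Z\<bar> + 1/B^3 + 1)/(2*(v\<bullet>p)^2)"
  have vp2: "0 < (v\<bullet>p)^2" using vp0 by simp
  have Kp: "0 < K" unfolding K_def using B vp2 by (simp add: add_nonneg_pos)
  have K2: "2*K*(v\<bullet>p)^2 = \<bar>Z\<bar> + 1/B^3 + 1" unfolding K_def using vp2 by simp
  define Psi where "Psi \<equiv> \<lambda>z. t + p \<bullet> (z - x) + (1/t) * ((z-x)\<bullet>(z-x)) + (-(3/4)/t) * (e1\<bullet>(z-x))^2
      + (-(1/4)/t)*(e2\<bullet>(z-x))^2 + (-K)*(v\<bullet>(z-x))^2"
  define phi where "phi \<equiv> \<lambda>z. f t + B*(Psi z - t) + 0*(Psi z - t)^2"
  have C2: "C2_on \<Omega> phi" unfolding phi_def Psi_def by (rule tf_main(1))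
  have IL0: "inf_laplacian phi x = 2*0*B^2*(p\<bullet>p)^2 + B^3*(2*(1/t)*(p\<bullet>p) + 2*(-(3/4)/t)*(e1\<bullet>p)^2
     + 2*(-(1/4)/t)*(e2\<bullet>p)^2 + 2*(-K)*(v\<bullet>p)^2)" unfolding phi_def Psi_def by (rule tf_main(2))
  have IL: "inf_laplacian phi x = B^3 * (Z - 2*K*(v\<bullet>p)^2)" using IL0 unfolding Z_def by (simp add: algebra_simps)
  have big: "- inf_laplacian phi x > 1"
  proof -
    have "- inf_laplacian phi x = B^3 * (\<bar>Z\<bar> - Z) + 1 + B^3"
      unfolding IL K2 using B by (simp add: algebra_simps)
    moreover have "0 \<le> B^3 * (\<bar>Z\<bar> - Z)" using B by simp
    moreover have "0 < B^3" using B by simp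
    ultimately show ?thesis by linarith
  qed
  have ux: "u x = f t" using web[of x] x closure_subset unfolding t_def by auto
  have phx: "phi x = f t" unfolding phi_def Psi_def by simp
  define \<epsilon> where "\<epsilon> = min (t/4) (min \<delta>0 (1/(16*K)))"
  have ep: "0 < \<epsilon>" unfolding \<epsilon>_def using t d0 Kp by simp
  have "local_min_at \<Omega> (\<lambda>z. phi z - u z) x"
    unfolding local_min_at_def
  proof (intro exI conjI ballI)
    show "0 < \<epsilon>" by (rule ep)
    fix z assume z: "z \<in> \<Omega> \<inter> ball x \<epsilon>"
    define w where "w = z - x"
    have nw: "norm w < \<epsilon>" using z unfolding w_def by (simp add: dist_norm norm_minus_commute)
    have nw3: "norm w < t/4" "norm w < \<delta>0" "norm w < 1/(16*K)"
      using nw unfolding \<epsilon>_def by auto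
    have nw2: "norm w \<le> t/2" "norm w \<le> t/4" "norm w < \<delta>0" "norm w \<le> 1/(16*K)"
      using nw3 norm_ge_zero[of w] by linarith+
    define Q1 where "Q1 = t + e1 \<bullet> w + (w \<bullet> w - (e1 \<bullet> w)^2)/t"
    define Q2 where "Q2 = t + e2 \<bullet> w + (w \<bullet> w - (e2 \<bullet> w)^2)/t"
    have "z - y1 = t *\<^sub>R e1 + w" unfolding w_def using x1 by (simp add: algebra_simps)
    then have "dist z y1 \<le> Q1" unfolding Q1_def using norm_quad_bound[OF n1 t nw2(1)] by (simp add: dist_norm)
    then have d1: "d z \<le> Q1" using d_le[OF y1(1), of z] by linarith
    have "z - y2 = t *\<^sub>R e2 + w" unfolding w_def using x2 by (simp add: algebra_simps)
    then have "dist z y2 \<le> Q2" unfolding Q2_def using norm_quad_bound[OF n2 t nw2(1)] by (simp add: dist_norm)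
    then have d2: "d z \<le> Q2" using d_le[OF y2(1), of z] by linarith
    have dm: "d z \<le> (3/4)*Q1 + (1/4)*Q2 - \<bar>Q1 - Q2\<bar>/4"
      using min_combo[of Q1 Q2] d1 d2 by simp
    have qdiff: "Q1 - Q2 = (v \<bullet> w) * (1 - ((e1 + e2) \<bullet> w)/t)"
      unfolding Q1_def Q2_def v_def inner_diff_left inner_add_left using t by (intro alg4) simp
    have c: "\<bar>(e1 + e2) \<bullet> w\<bar> \<le> 2 * norm w"
    proof -
      have "\<bar>(e1 + e2) \<bullet> w\<bar> \<le> norm (e1 + e2) * norm w" by (rule Cauchy_Schwarz_ineq2)
      also have "\<dots> \<le> 2 * norm w" using norm_triangle_ineq[of e1 e2] n1 n2 by (intro mult_right_mono) auto
      finally show ?thesis .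
    qed
    have "\<bar>((e1 + e2) \<bullet> w)/t\<bar> \<le> 1/2"
    proof -
      have "\<bar>(e1 + e2) \<bullet> w\<bar> \<le> t/2" using c nw2(2) by linarith
      then show ?thesis by (rule alg3[OF t])
    qed
    then have fac: "1/2 \<le> \<bar>1 - ((e1 + e2) \<bullet> w)/t\<bar>" by linarith
    have qd: "\<bar>v \<bullet> w\<bar>/2 \<le> \<bar>Q1 - Q2\<bar>"
    proof -
      have "\<bar>v \<bullet> w\<bar> * (1/2) \<le> \<bar>v \<bullet> w\<bar> * \<bar>1 - ((e1 + e2) \<bullet> w)/t\<bar>"
        using fac by (intro mult_left_mono) auto
      then show ?thesis unfolding qdiff abs_mult by simp
    qed
    have vw: "\<bar>v \<bullet> w\<bar> \<le> 1/(8*K)"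
    proof -
      have "\<bar>v \<bullet> w\<bar> \<le> norm v * norm w" by (rule Cauchy_Schwarz_ineq2)
      also have "\<dots> \<le> 2 * (1/(16*K))" using nv nw2(4) by (intro mult_mono) auto
      finally show ?thesis by simp
    qed
    have kv: "K * (v \<bullet> w)^2 \<le> \<bar>v \<bullet> w\<bar>/8"
    proof -
      have "K * (v \<bullet> w)^2 = (K * \<bar>v \<bullet> w\<bar>) * \<bar>v \<bullet> w\<bar>" by (simp add: power2_eq_square abs_mult_self)
      also have "\<dots> \<le> (K * (1/(8*K))) * \<bar>v \<bullet> w\<bar>" using vw Kp by (intro mult_right_mono mult_left_mono) auto
      also have "\<dots> = \<bar>v \<bullet> w\<bar>/8" using Kp by simp
      finally show ?thesis .
    qed
    have pw: "p \<bullet> w = 3/4*(e1 \<bullet> w) + 1/4*(e2 \<bullet> w)" unfolding p_def by (simp add: inner_add_left)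
    have psi: "Psi z = (3/4)*Q1 + (1/4)*Q2 - K * (v \<bullet> w)^2"
      unfolding Psi_def Q1_def Q2_def w_def[symmetric] pw using t by (intro alg2) simp
    have gen: "\<And>D P X Y Kv a::real. D \<le> a - X/4 \<Longrightarrow> Y/2 \<le> X \<Longrightarrow> Kv \<le> Y/8 \<Longrightarrow> P = a - Kv \<Longrightarrow> D \<le> P"
      by linarith
    have dpsi: "d z \<le> Psi z" by (rule gen[OF dm qd kv psi])
    have xc: "z \<in> closure \<Omega>" using z closure_subset by auto
    have s0: "0 \<le> d z" "d z \<le> \<rho>" using d_nonneg d_le_rho[OF xc] by auto
    have "\<bar>d z - t\<bar> < \<delta>0" using dclose[of z x] nw2(3) unfolding t_def w_def by (simp add: dist_norm)
    then have "u z \<le> f t + B*(d z - t)" using tan[OF s0] web[OF xc] unfolding t_def by simp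
    also have "\<dots> \<le> f t + B*(Psi z - t)" using dpsi B by simp
    also have "\<dots> = phi z" unfolding phi_def by simp
    finally show "phi x - u x \<le> phi z - u z" using phx ux by simp
  qed
  from vsub[OF C2 x this] big show False by simp
qed

end

lemma taylor_up:
  fixes w w1 w2 :: "real \<Rightarrow> real"
  assumes d1: "\<And>s. a < s \<Longrightarrow> s < b \<Longrightarrow> (w has_real_derivative w1 s) (at s)"
    and d2: "\<And>s. a < s \<Longrightarrow> s < b \<Longrightarrow> (w1 has_real_derivative w2 s) (at s)"
    and t: "a < t" "t < b" and eta: "0 < \<eta>"
  shows "\<exists>\<delta>>0. \<forall>s. \<bar>s - t\<bar> < \<delta> \<longrightarrow> w s \<le> w t + w1 t*(s-t) + ((w2 t + \<eta>)/2)*(s-t)^2"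
proof -
  define D where "D s = w s - (w t + w1 t*(s-t) + ((w2 t + \<eta>)/2)*(s-t)^2)" for s
  define D1 where "D1 s = w1 s - w1 t - (w2 t + \<eta>)*(s-t)" for s
  have dD: "(D has_real_derivative D1 s) (at s)" if "a < s" "s < b" for s
    unfolding D_def D1_def
    apply (rule DERIV_cong)
     apply (rule derivative_intros d1 that)+
    apply (simp add: field_simps)
    done
  have dD1: "(D1 has_real_derivative (w2 t - (w2 t + \<eta>))) (at t)"
    unfolding D1_def
    apply (rule DERIV_cong)
     apply (rule derivative_intros d2 t)+
    apply (simp add: algebra_simps)
    done
  have neg: "w2 t - (w2 t + \<eta>) < 0" using eta by simp
  obtain e1 where e1: "0 < e1" "\<And>h. 0 < h \<Longrightarrow> h < e1 \<Longrightarrow> D1 t < D1 (t - h)"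
    using DERIV_neg_dec_left[OF dD1 neg] by blast
  obtain e2 where e2: "0 < e2" "\<And>h. 0 < h \<Longrightarrow> h < e2 \<Longrightarrow> D1 t > D1 (t + h)"
    using DERIV_neg_dec_right[OF dD1 neg] by blast
  have D1t: "D1 t = 0" unfolding D1_def by simp
  have Dt: "D t = 0" unfolding D_def by simp
  define \<delta> where "\<delta> = min (min e1 e2) (min (t - a) (b - t))"
  have dp: "0 < \<delta>" unfolding \<delta>_def using e1 e2 t by simp
  show ?thesis
  proof (intro exI conjI allI impI)
    show "0 < \<delta>" by (rule dp)
    fix s assume s: "\<bar>s - t\<bar> < \<delta>"
    have "D s \<le> 0"
    proof (cases s t rule: linorder_cases)
      case less
      obtain z where z: "s < z" "z < t" "D t - D s = (t - s) * D1 z"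
        using MVT2[OF less, of D D1] dD s t unfolding \<delta>_def by fastforce
      have "0 < D1 z" using e1(2)[of "t - z"] z s D1t unfolding \<delta>_def by simp
      then show ?thesis using z Dt less by (smt (verit) mult_pos_pos)
    next
      case equal then show ?thesis using Dt by simp
    next
      case greater
      obtain z where z: "t < z" "z < s" "D s - D t = (s - t) * D1 z"
        using MVT2[OF greater, of D D1] dD s t unfolding \<delta>_def by fastforce
      have "D1 z < 0" using e2(2)[of "z - t"] z s D1t unfolding \<delta>_def by simp
      then show ?thesis using z Dt greater by (smt (verit) mult_pos_neg)
    qed
    then show "w s \<le> w t + w1 t*(s-t) + ((w2 t + \<eta>)/2)*(s-t)^2" unfolding D_def by simp
  qed
qed

lemma taylor_down:
  fixes w w1 w2 :: "real \<Rightarrow> real"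
  assumes d1: "\<And>s. a < s \<Longrightarrow> s < b \<Longrightarrow> (w has_real_derivative w1 s) (at s)"
    and d2: "\<And>s. a < s \<Longrightarrow> s < b \<Longrightarrow> (w1 has_real_derivative w2 s) (at s)"
    and t: "a < t" "t < b" and eta: "0 < \<eta>"
  shows "\<exists>\<delta>>0. \<forall>s. \<bar>s - t\<bar> < \<delta> \<longrightarrow> w t + w1 t*(s-t) + ((w2 t - \<eta>)/2)*(s-t)^2 \<le> w s"
proof -
  have d1': "((\<lambda>s. - w s) has_real_derivative - w1 s) (at s)" if "a < s" "s < b" for s
    using d1[OF that] by (rule derivative_intros)
  have d2': "((\<lambda>s. - w1 s) has_real_derivative - w2 s) (at s)" if "a < s" "s < b" for s
    using d2[OF that] by (rule derivative_intros)
  obtain \<delta> where "\<delta> > 0" "\<forall>s. \<bar>s - t\<bar> < \<delta> \<longrightarrow> - w s \<le> - w t + - w1 t*(s-t) + ((- w2 t + \<eta>)/2)*(s-t)^2"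
    using taylor_up[of a b "\<lambda>s. - w s" "\<lambda>s. - w1 s" "\<lambda>s. - w2 s", OF d1' d2' t eta] by blast
  then show ?thesis by (intro exI[of _ \<delta>]) (auto simp: algebra_simps diff_divide_distrib)
qed

definition c0 :: real where "c0 = 3 powr (4/3) / 4"
definition W :: "real \<Rightarrow> real \<Rightarrow> real \<Rightarrow> real" where
  "W l C s = l*c0*(C powr (4/3) - (C - s) powr (4/3))"
definition W1 :: "real \<Rightarrow> real \<Rightarrow> real \<Rightarrow> real" where
  "W1 l C s = l*c0*(4/3)*(C - s) powr (1/3)"
definition W2 :: "real \<Rightarrow> real \<Rightarrow> real \<Rightarrow> real" where
  "W2 l C s = -l*c0*(4/9)*(C - s) powr (-2/3)"

lemma c0_pos: "0 < c0" unfolding c0_def by simp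

lemma c0_cube: "c0^3 = 81/64"
proof -
  have "(3 powr (4/3::real))^3 = 3 powr (4/3 * 3)"
    by (subst powr_realpow[symmetric]) (simp_all add: powr_powr)
  also have "\<dots> = 81" by (simp add: powr_realpow[symmetric])
  finally show ?thesis unfolding c0_def by (simp add: power_divide)
qed

lemma W_d1: "s < C \<Longrightarrow> (W l C has_real_derivative W1 l C s) (at s)"
  unfolding W_def W1_def
  apply (rule DERIV_cong)
   apply (rule derivative_intros | simp)+
  done

lemma W_d2: "s < C \<Longrightarrow> (W1 l C has_real_derivative W2 l C s) (at s)"
  unfolding W2_def W1_def
  apply (rule DERIV_cong)
   apply (rule derivative_intros | simp)+
  done

lemma W1_pos: "s < C \<Longrightarrow> 0 < l \<Longrightarrow> 0 < W1 l C s"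
  unfolding W1_def using c0_pos by simp

lemma W_key: "s < C \<Longrightarrow> - W2 l C s * (W1 l C s)^2 = l^3"
proof -
  assume s: "s < C"
  have "((C - s) powr (1/3))^2 * (C - s) powr (-2/3) = 1"
    using s by (simp add: powr_realpow[symmetric] powr_powr powr_add[symmetric])
  then have "- W2 l C s * (W1 l C s)^2 = l^3 * c0^3 * (64/81)"
    unfolding W1_def W2_def by (simp add: algebra_simps power2_eq_square power3_eq_cube)
  then show ?thesis using c0_cube by simp
qed

lemma W_C: "W l C C = l*c0*C powr (4/3)" unfolding W_def by simp
lemma W_0: "W l C 0 = 0" unfolding W_def by simp

lemma W_cont: "(\<And>s. s \<in> S \<Longrightarrow> s \<le> C) \<Longrightarrow> continuous_on S (W l C)"
  unfolding W_def by (intro continuous_intros continuous_on_powr') auto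

lemma W_lim:
  assumes "L \<longlonglongrightarrow> 1" "Cs \<longlonglongrightarrow> \<rho>" "s \<le> \<rho>" "\<forall>n. s \<le> Cs n" "0 < \<rho>"
  shows "(\<lambda>n. W (L n) (Cs n) s) \<longlonglongrightarrow> W 1 \<rho> s"
  unfolding W_def using assms
  by (intro tendsto_intros) auto

locale oned =
  fixes f :: "real \<Rightarrow> real" and \<rho> :: real
  assumes r: "0 < \<rho>" and fc: "continuous_on {0..\<rho>} f" and f0: "f 0 = 0"
  and sub: "\<And>t0 B Cc \<delta>. 0<t0 \<Longrightarrow> t0 \<le> \<rho> \<Longrightarrow> 0<B \<Longrightarrow> 0<\<delta> \<Longrightarrow>
     (\<And>s. 0\<le>s \<Longrightarrow> s\<le>\<rho> \<Longrightarrow> \<bar>s-t0\<bar><\<delta> \<Longrightarrow> f s \<le> f t0 + B*(s-t0) + Cc*(s-t0)^2) \<Longrightarrow> -(2*Cc*B^2) \<le> 1"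
  and sup: "\<And>t0 B Cc \<delta>. 0<t0 \<Longrightarrow> t0 < \<rho> \<Longrightarrow> 0<B \<Longrightarrow> 0<\<delta> \<Longrightarrow>
     (\<And>s. 0\<le>s \<Longrightarrow> s\<le>\<rho> \<Longrightarrow> \<bar>s-t0\<bar><\<delta> \<Longrightarrow> f t0 + B*(s-t0) + Cc*(s-t0)^2 \<le> f s) \<Longrightarrow> -(2*Cc*B^2) \<ge> 1"
  and nomin: "\<And>t0 \<delta>. 0<t0 \<Longrightarrow> t0 \<le> \<rho> \<Longrightarrow> 0<\<delta> \<Longrightarrow>
     (\<And>s. 0\<le>s \<Longrightarrow> s\<le>\<rho> \<Longrightarrow> \<bar>s-t0\<bar><\<delta> \<Longrightarrow> f t0 \<le> f s) \<Longrightarrow> False"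
begin

lemma fc_sub: "S \<subseteq> {0..\<rho>} \<Longrightarrow> continuous_on S f" using fc continuous_on_subset by blast

lemma mono:
  assumes ab: "0 \<le> a" "a < b" "b \<le> \<rho>"
  shows "f a < f b"
proof -
  have nm: False if m: "a < m" "m \<le> \<rho>" "\<forall>s\<in>{a..\<rho>}. f m \<le> f s" for m
  proof (rule nomin[of m "m - a"])
    show "0 < m" "m \<le> \<rho>" "0 < m - a" using m ab by auto
    fix s assume "0 \<le> s" "s \<le> \<rho>" "\<bar>s - m\<bar> < m - a"
    then show "f m \<le> f s" using m(3) by auto
  qed
  obtain m where m: "m \<in> {a..\<rho>}" "\<forall>s\<in>{a..\<rho>}. f m \<le> f s"
    using continuous_attains_inf[of "{a..\<rho>}" f] fc_sub[of "{a..\<rho>}"] ab by auto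
  have "m = a" using nm[of m] m by force
  then have fa: "\<forall>s\<in>{a..\<rho>}. f a \<le> f s" using m by simp
  show ?thesis
  proof (rule ccontr)
    assume "\<not> f a < f b"
    then have "\<forall>s\<in>{a..\<rho>}. f b \<le> f s" using fa ab by force
    then show False using nm[of b] ab by auto
  qed
qed

lemma concave:
  assumes abt: "0 \<le> a" "a < t" "t < b" "b \<le> \<rho>"
  shows "f a + (f b - f a)*(t - a)/(b - a) \<le> f t"
proof (rule ccontr)
  assume ct: "\<not> ?thesis"
  define sl where "sl = (f b - f a)/(b - a)"
  define L where "L s = f a + sl*(s - a)" for s
  have Lt: "f t < L t" using ct unfolding L_def sl_def by (simp add: field_simps)
  define pp where "pp = (t - a)*(b - t)"
  have P: "0 < pp" unfolding pp_def using abt by simp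
  define \<epsilon> where "\<epsilon> = (L t - f t)/(2*pp)"
  have ep: "0 < \<epsilon>" unfolding \<epsilon>_def using Lt P by simp
  define q where "q s = L s + \<epsilon>*(s-a)*(s-b)" for s
  have qt: "f t < q t"
  proof -
    have "\<epsilon>*pp = (L t - f t)/2" unfolding \<epsilon>_def using P by simp
    moreover have "\<epsilon>*(t-a)*(t-b) = - (\<epsilon>*pp)" unfolding pp_def by (simp add: algebra_simps)
    ultimately have eq: "\<epsilon>*(t-a)*(t-b) = - (L t - f t)/2" by simp
    show ?thesis unfolding q_def eq using Lt by (simp add: field_simps)
  qed
  have qa: "q a = f a" unfolding q_def L_def by simp
  have "sl*(b - a) = f b - f a" unfolding sl_def using abt by simp
  then have qb: "q b = f b" unfolding q_def L_def by simp
  have kc: "continuous_on {a..b} (\<lambda>s. f s - q s)"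
    unfolding q_def L_def by (intro continuous_intros fc_sub) (use abt in auto)
  obtain m where m: "m \<in> {a..b}" "\<forall>s\<in>{a..b}. f m - q m \<le> f s - q s"
    using continuous_attains_inf[OF _ _ kc] abt by auto
  have km: "f m - q m < 0" using m(2)[rule_format, of t] qt abt by auto
  have mab: "a < m" "m < b" using km m(1) qa qb by (auto simp: le_less)
  define B where "B = sl + \<epsilon>*(2*m - a - b)"
  have qd: "q s - q m = B*(s-m) + \<epsilon>*(s-m)^2" for s
    unfolding q_def L_def B_def by (simp add: power2_eq_square algebra_simps)
  have low: "f m + B*(s-m) + \<epsilon>*(s-m)^2 \<le> f s" if "s \<in> {a..b}" for s
    using m(2)[rule_format, OF that] qd[of s] by simp
  show False
  proof (cases "0 < B")
    case True
    have "-(2*\<epsilon>*B^2) \<ge> 1"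
    proof (rule sup[of m B "min (m - a) (b - m)"])
      show "0 < m" "m < \<rho>" "0 < B" "0 < min (m - a) (b - m)" using mab abt True by auto
      fix s assume "0 \<le> s" "s \<le> \<rho>" "\<bar>s - m\<bar> < min (m - a) (b - m)"
      then have "s \<in> {a..b}" by auto
      then show "f m + B*(s-m) + \<epsilon>*(s-m)^2 \<le> f s" by (rule low)
    qed
    moreover have "0 < 2*\<epsilon>*B^2" using ep True by simp
    ultimately show False by linarith
  next
    case False
    define s where "s = (a + m)/2"
    have s: "s \<in> {a..b}" "a \<le> s" "s < m" using mab unfolding s_def by auto
    have "f m \<le> f s"
    proof -
      have "0 \<le> B*(s-m)" using False s by (simp add: mult_nonpos_nonpos)
      moreover have "0 \<le> \<epsilon>*(s-m)^2" using ep by simp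
      ultimately show ?thesis using low[OF s(1)] by linarith
    qed
    moreover have "f s < f m" using mono[of s m] s abt mab by auto
    ultimately show False by simp
  qed
qed

end

definition io :: "nat \<Rightarrow> real" where "io n = inverse (real (Suc n))"
lemma io_pos: "0 < io n" and io_le: "io n \<le> 1" unfolding io_def by (auto simp: field_simps)
lemma io_lim: "io \<longlonglongrightarrow> 0" unfolding io_def by (rule LIMSEQ_inverse_real_of_nat)
lemma io_lim2: "(\<lambda>n. a - b * io n / 2) \<longlonglongrightarrow> a"
proof -
  have "(\<lambda>n. a - b * io n / 2) \<longlonglongrightarrow> a - b * 0 / 2" by (intro tendsto_intros io_lim) auto
  then show ?thesis by simp
qed

context oned begin

lemma le_W:
  assumes l: "1 < l" and C: "\<rho> < C"
  shows "\<forall>s\<in>{0..\<rho>}. f s \<le> W l C s"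
proof -
  have kc: "continuous_on {0..\<rho>} (\<lambda>s. f s - W l C s)"
    using fc W_cont[of "{0..\<rho>}" C l] C by (intro continuous_intros) auto
  obtain t where t: "t \<in> {0..\<rho>}" "\<forall>s\<in>{0..\<rho>}. f s - W l C s \<le> f t - W l C t"
    using continuous_attains_sup[OF _ _ kc] r by auto
  show ?thesis
  proof (cases "t = 0")
    case True
    then show ?thesis using t(2) f0 W_0 by fastforce
  next
    case False
    then have t0: "0 < t" "t \<le> \<rho>" "t < C" using t C by auto
    define B where "B = W1 l C t"
    define w2 where "w2 = W2 l C t"
    have B: "0 < B" unfolding B_def using W1_pos t0 l by simp
    have key: "- w2 * B^2 = l^3" unfolding B_def w2_def using W_key t0 by simp
    define \<eta> where "\<eta> = (l^3 - 1)/(2*B^2)"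
    have l3: "1 < l^3" using l by (simp add: one_less_power)
    have eta: "0 < \<eta>" unfolding \<eta>_def using l3 B by simp
    have etaB: "\<eta> * B^2 = (l^3 - 1)/2" unfolding \<eta>_def using B by simp
    obtain \<delta> where dl: "0 < \<delta>" "\<forall>s. \<bar>s - t\<bar> < \<delta> \<longrightarrow> W l C s \<le> W l C t + W1 l C t*(s-t) + ((W2 l C t + \<eta>)/2)*(s-t)^2"
      using taylor_up[of "t - 1" C "W l C" "W1 l C" "W2 l C" t \<eta>] W_d1 W_d2 t0 eta by auto
    have "-(2*((w2 + \<eta>)/2)*B^2) \<le> 1"
    proof (rule sub[OF t0(1,2) B dl(1)])
      fix s assume s: "0 \<le> s" "s \<le> \<rho>" "\<bar>s - t\<bar> < \<delta>"
      have "f s - W l C s \<le> f t - W l C t" using t(2) s by auto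
      then show "f s \<le> f t + B*(s-t) + ((w2 + \<eta>)/2)*(s-t)^2"
        using dl(2) s(3) unfolding B_def w2_def by force
    qed
    then have "- w2 * B^2 - \<eta> * B^2 \<le> 1" by (simp add: algebra_simps)
    moreover have "\<And>X Y Z::real. X - Y \<le> 1 \<Longrightarrow> X = Z \<Longrightarrow> Y = (Z-1)/2 \<Longrightarrow> 1 < Z \<Longrightarrow> False" by (simp add: field_simps)
    ultimately have False using key etaB l3 by blast
    then show ?thesis ..
  qed
qed

lemma f_le: assumes s: "0 \<le> s" "s \<le> \<rho>" shows "f s \<le> W 1 \<rho> s"
proof -
  have lim: "(\<lambda>n. W (1 + io n) (\<rho> + io n) s) \<longlonglongrightarrow> W 1 \<rho> s"
  proof (rule W_lim)
    show "(\<lambda>n. 1 + io n) \<longlonglongrightarrow> 1" using tendsto_add[OF tendsto_const io_lim, of 1] by simp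
    show "(\<lambda>n. \<rho> + io n) \<longlonglongrightarrow> \<rho>" using tendsto_add[OF tendsto_const io_lim, of \<rho>] by simp
    show "s \<le> \<rho>" "\<forall>n. s \<le> \<rho> + io n" "0 < \<rho>" using s io_pos r by (auto simp: add_increasing2 less_imp_le)
  qed
  have "\<forall>n. f s \<le> W (1 + io n) (\<rho> + io n) s"
    using le_W[of "1 + io n" "\<rho> + io n" for n] io_pos s by auto
  then show ?thesis using LIMSEQ_le_const[OF lim] by blast
qed


lemma ge_W:
  assumes l: "0 < l" "l < 1" and C: "0 < C" "C < \<rho>"
  shows "\<forall>s\<in>{0..C}. W l C s \<le> f s"
proof -
  have kc: "continuous_on {0..C} (\<lambda>s. f s - W l C s)"
    using fc_sub[of "{0..C}"] W_cont[of "{0..C}" C l] C by (intro continuous_intros) auto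
  obtain t where t: "t \<in> {0..C}" "\<forall>s\<in>{0..C}. f t - W l C t \<le> f s - W l C s"
    using continuous_attains_inf[OF _ _ kc] C by auto
  consider "t = 0" | "0 < t \<and> t < C" | "t = C" using t(1) by fastforce
  then show ?thesis
  proof cases
    case 1
    then show ?thesis using t(2) f0 W_0 by fastforce
  next
    case 2
    then have t0: "0 < t" "t < \<rho>" "t < C" using C by auto
    define B where "B = W1 l C t"
    define w2 where "w2 = W2 l C t"
    have B: "0 < B" unfolding B_def using W1_pos t0 l by simp
    have key: "- w2 * B^2 = l^3" unfolding B_def w2_def using W_key t0 by simp
    define \<eta> where "\<eta> = (1 - l^3)/(2*B^2)"
    have l3: "l^3 < 1" using l power_strict_mono[of l 1 3] by simp
    have eta: "0 < \<eta>" unfolding \<eta>_def using l3 B by simp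
    have etaB: "\<eta> * B^2 = (1 - l^3)/2" unfolding \<eta>_def using B by simp
    obtain \<delta>0 where dl: "0 < \<delta>0" "\<forall>s. \<bar>s - t\<bar> < \<delta>0 \<longrightarrow> W l C t + W1 l C t*(s-t) + ((W2 l C t - \<eta>)/2)*(s-t)^2 \<le> W l C s"
      using taylor_down[of "t - 1" C "W l C" "W1 l C" "W2 l C" t \<eta>] W_d1 W_d2 t0 eta by auto
    define \<delta> where "\<delta> = min \<delta>0 (C - t)"
    have dp: "0 < \<delta>" unfolding \<delta>_def using dl t0 by simp
    have "-(2*((w2 - \<eta>)/2)*B^2) \<ge> 1"
    proof (rule sup[OF t0(1,2) B dp])
      fix s assume s: "0 \<le> s" "s \<le> \<rho>" "\<bar>s - t\<bar> < \<delta>"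
      then have "s \<in> {0..C}" unfolding \<delta>_def by auto
      then have "f t - W l C t \<le> f s - W l C s" using t(2) by auto
      moreover have "\<bar>s - t\<bar> < \<delta>0" using s(3) unfolding \<delta>_def by auto
      ultimately show "f t + B*(s-t) + ((w2 - \<eta>)/2)*(s-t)^2 \<le> f s"
        using dl(2) unfolding B_def w2_def by force
    qed
    then have "- w2 * B^2 + \<eta> * B^2 \<ge> 1" by (simp add: algebra_simps)
    moreover have "\<And>X Y Z::real. X + Y \<ge> 1 \<Longrightarrow> X = Z \<Longrightarrow> Y = (1-Z)/2 \<Longrightarrow> Z < 1 \<Longrightarrow> False" by (simp add: field_simps)
    ultimately have False using key etaB l3 by blast
    then show ?thesis ..
  next
    case 3
    define \<tau> where "\<tau> = (C + \<rho>)/2"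
    have tau: "C < \<tau>" "\<tau> < \<rho>" unfolding \<tau>_def using C by auto
    define m where "m = f \<tau> - f C"
    have m: "0 < m" unfolding m_def using mono[of C \<tau>] tau C by auto
    have main: "m \<le> l*c0*(\<tau> - C)*(C - s) powr (1/3)" if s: "0 \<le> s" "s < C" for s
    proof -
      have "f C - W l C C \<le> f s - W l C s" using t(2) 3 s by auto
      then have fd: "f C - f s \<le> l*c0*(C - s) powr (4/3)" unfolding W_def by (simp add: right_diff_distrib)
      have cc: "f s + (f \<tau> - f s)*(C - s)/(\<tau> - s) \<le> f C" using concave[of s C \<tau>] s tau by auto
      then have "(f \<tau> - f s)*(C - s) \<le> (f C - f s)*(\<tau> - s)" using s tau
        by (simp add: field_simps)
      then have "m*(C - s) \<le> (f C - f s)*(\<tau> - C)" unfolding m_def by (simp add: algebra_simps)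
      also have "\<dots> \<le> l*c0*(C - s) powr (4/3) * (\<tau> - C)" using fd tau by (intro mult_right_mono) auto
      also have "(C - s) powr (4/3) = (C - s) * (C - s) powr (1/3)"
      proof -
        have "(C - s) powr (4/3) = (C - s) powr (1 + 1/3)" by simp
        also have "\<dots> = (C - s) powr 1 * (C - s) powr (1/3)" by (rule powr_add)
        finally show ?thesis using s by simp
      qed
      finally have "m*(C - s) \<le> (l*c0*(\<tau> - C)*(C - s) powr (1/3)) * (C - s)" by (simp add: algebra_simps)
      then show ?thesis using s by simp
    qed
    define K where "K = m/(l*c0*(\<tau> - C))"
    have K: "0 < K" unfolding K_def using m l c0_pos tau by simp
    define \<kappa> where "\<kappa> = min (C/2) ((K/2)^3)"
    have kp: "0 < \<kappa>" "\<kappa> \<le> C/2" unfolding \<kappa>_def using K C by auto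
    have "\<kappa> powr (1/3) \<le> ((K/2)^3) powr (1/3)" unfolding \<kappa>_def using kp K by (intro powr_mono2) auto
    also have "((K/2)^3) powr (1/3) = K/2"
    proof -
      have "(K/2)^3 = (K/2) powr 3" using K by (simp add: powr_numeral)
      then have "((K/2)^3) powr (1/3) = (K/2) powr (3 * (1/3))" by (simp add: powr_powr)
      also have "\<dots> = K/2" using K by simp
      finally show ?thesis .
    qed
    finally have kk: "\<kappa> powr (1/3) \<le> K/2" .
    have "m \<le> l*c0*(\<tau> - C)*(C - (C - \<kappa>)) powr (1/3)" using main[of "C - \<kappa>"] kp C by simp
    also have "\<dots> \<le> l*c0*(\<tau> - C)*(K/2)" using kk l c0_pos tau by (intro mult_left_mono) auto
    also have "\<dots> = m/2" unfolding K_def using l c0_pos tau by (simp add: field_simps)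
    finally have False using m by simp
    then show ?thesis ..
  qed
qed

lemma f_ge: assumes s: "0 \<le> s" "s \<le> \<rho>" shows "W 1 \<rho> s \<le> f s"
proof (cases "s < \<rho>")
  case True
  define L where "L n = 1 - io n / 2" for n
  define Cs where "Cs n = \<rho> - (\<rho> - s) * io n / 2" for n
  have lim: "(\<lambda>n. W (L n) (Cs n) s) \<longlonglongrightarrow> W 1 \<rho> s"
  proof (rule W_lim)
    show "L \<longlonglongrightarrow> 1" unfolding L_def using io_lim2[of 1 1] by simp
    show "Cs \<longlonglongrightarrow> \<rho>" unfolding Cs_def by (rule io_lim2)
    show "s \<le> \<rho>" "0 < \<rho>" using s r by auto
    show "\<forall>n. s \<le> Cs n"
    proof
      fix n have "(\<rho> - s) * io n \<le> (\<rho> - s) * 1" using io_le True by (intro mult_left_mono) auto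
      then show "s \<le> Cs n" unfolding Cs_def using True by (simp add: field_simps)
    qed
  qed
  have "\<forall>n. W (L n) (Cs n) s \<le> f s"
  proof
    fix n
    have i: "0 < io n" "io n \<le> 1" using io_pos io_le by auto
    have a: "(\<rho> - s) * io n \<le> (\<rho> - s)" using i True by (simp add: mult_left_le)
    have b: "0 < (\<rho> - s) * io n" using i True by simp
    have "0 < L n" "L n < 1" unfolding L_def using i by auto
    moreover have "0 < Cs n" "Cs n < \<rho>" "s \<le> Cs n" unfolding Cs_def using a b s by (auto simp: field_simps)
    ultimately show "W (L n) (Cs n) s \<le> f s" using ge_W[of "L n" "Cs n"] s by auto
  qed
  then show ?thesis using LIMSEQ_le_const2[OF lim] by blast
next
  case False
  then have sr: "s = \<rho>" using s by simp
  define L where "L n = 1 - io n / 2" for n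
  define Cs where "Cs n = \<rho> - \<rho> * io n / 2" for n
  have lim: "(\<lambda>n. L n * c0 * Cs n powr (4/3)) \<longlonglongrightarrow> 1 * c0 * \<rho> powr (4/3)"
  proof (intro tendsto_intros)
    show "L \<longlonglongrightarrow> 1" unfolding L_def using io_lim2[of 1 1] by simp
    show "Cs \<longlonglongrightarrow> \<rho>" unfolding Cs_def by (rule io_lim2)
    show "\<rho> \<noteq> 0 \<or> 0 < 4/(3::real) \<and> (\<forall>\<^sub>F x in sequentially. 0 \<le> Cs x)" using r by simp
  qed
  have "\<forall>n. L n * c0 * Cs n powr (4/3) \<le> f \<rho>"
  proof
    fix n
    have i: "0 < io n" "io n \<le> 1" using io_pos io_le by auto
    have a: "\<rho> * io n \<le> \<rho>" using i r by (simp add: mult_left_le)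
    have b: "0 < \<rho> * io n" using i r by simp
    have "0 < L n" "L n < 1" unfolding L_def using i by auto
    moreover have "0 < Cs n" "Cs n < \<rho>" unfolding Cs_def using a b i by (auto simp: field_simps)
    ultimately have "W (L n) (Cs n) (Cs n) \<le> f (Cs n)" using ge_W[of "L n" "Cs n"] by auto
    also have "f (Cs n) < f \<rho>" using mono[of "Cs n" \<rho>] \<open>0 < Cs n\<close> \<open>Cs n < \<rho>\<close> by auto
    finally show "L n * c0 * Cs n powr (4/3) \<le> f \<rho>" unfolding W_C by simp
  qed
  then have "1 * c0 * \<rho> powr (4/3) \<le> f \<rho>" using LIMSEQ_le_const2[OF lim] by blast
  then show ?thesis unfolding sr W_C by simp
qed

lemma f_eq: "0 \<le> s \<Longrightarrow> s \<le> \<rho> \<Longrightarrow> f s = W 1 \<rho> s"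
  using f_le f_ge by (simp add: eq_iff)

end

lemma W2_neg: "s < C \<Longrightarrow> 0 < l \<Longrightarrow> W2 l C s < 0"
  unfolding W2_def using c0_pos by simp

theorem theorem13:
  fixes \<Omega> :: "'a::euclidean_space set" and u :: "'a \<Rightarrow> real"
  assumes "open \<Omega>" and "bounded \<Omega>" and "connected \<Omega>" and "\<Omega> \<noteq> {}"
    and "web_function \<Omega> u" and "viscosity_solution \<Omega> u"
  shows "(\<forall>x\<in>closure \<Omega>. u x = phi_Omega \<Omega> x) \<and> cut_locus \<Omega> = high_ridge \<Omega>"
proof -
  interpret dom \<Omega> using assms by unfold_locales auto
  obtain f where fc: "continuous_on {0..\<rho>} f" and fw: "\<forall>x\<in>closure \<Omega>. u x = f (d x)"
    using assms(5) unfolding web_function_def by blast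
  interpret wsol \<Omega> u f using fc fw assms(6) by unfold_locales auto
  interpret oned f \<rho>
  proof (unfold_locales)
    show "0 < \<rho>" by (rule rho_pos)
    show "continuous_on {0..\<rho>} f" by (rule fc)
    show "f 0 = 0" by (rule f0)
  next
    fix t0 B Cc \<delta> assume "0 < t0" "t0 \<le> \<rho>" "0 < B" "0 < \<delta>"
      "\<And>s. 0 \<le> s \<Longrightarrow> s \<le> \<rho> \<Longrightarrow> \<bar>s - t0\<bar> < \<delta> \<Longrightarrow> f s \<le> f t0 + B * (s - t0) + Cc * (s - t0)\<^sup>2"
    then show "- (2 * Cc * B\<^sup>2) \<le> 1" by (rule sub1)
  next
    fix t0 B Cc \<delta> assume "0 < t0" "t0 < \<rho>" "0 < B" "0 < \<delta>"
      "\<And>s. 0 \<le> s \<Longrightarrow> s \<le> \<rho> \<Longrightarrow> \<bar>s - t0\<bar> < \<delta> \<Longrightarrow> f t0 + B * (s - t0) + Cc * (s - t0)\<^sup>2 \<le> f s"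
    then show "1 \<le> - (2 * Cc * B\<^sup>2)" by (rule sup1)
  next
    fix t0 \<delta> assume "0 < t0" "t0 \<le> \<rho>" "0 < \<delta>"
      "\<And>s. 0 \<le> s \<Longrightarrow> s \<le> \<rho> \<Longrightarrow> \<bar>s - t0\<bar> < \<delta> \<Longrightarrow> f t0 \<le> f s"
    then show False by (rule nomin)
  qed
  have part1: "\<forall>x\<in>closure \<Omega>. u x = phi_Omega \<Omega> x"
  proof
    fix x assume xc: "x \<in> closure \<Omega>"
    have "u x = f (d x)" using fw xc by blast
    also have "\<dots> = W 1 \<rho> (d x)" using f_eq d_nonneg d_le_rho[OF xc] by blast
    also have "\<dots> = phi_Omega \<Omega> x" unfolding W_def c0_def phi_Omega_def by simp
    finally show "u x = phi_Omega \<Omega> x" .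
  qed
  have sing: "singular_set \<Omega> \<subseteq> high_ridge \<Omega>"
  proof
    fix x assume xs: "x \<in> singular_set \<Omega>"
    then have xo: "x \<in> \<Omega>" and nd: "\<not> d differentiable (at x)" unfolding singular_set_def by auto
    have xc: "x \<in> closure \<Omega>" using xo closure_subset by auto
    have "d x = \<rho>"
    proof (rule ccontr)
      assume "d x \<noteq> \<rho>"
      then have lt: "d x < \<rho>" using d_le_rho[OF xc] by simp
      define t where "t = d x"
      have t: "0 < t" "t < \<rho>" unfolding t_def using d_pos[OF xo] lt by auto
      obtain y1 where y1: "y1 \<in> F" "dist x y1 = d x" using nearest by metis
      show False
      proof (cases "\<forall>y'. y' \<in> F \<longrightarrow> dist x y' = d x \<longrightarrow> y' = y1")
        case True
        then have "d differentiable (at x)" using diff_unique[OF xo y1] by blast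
        then show False using nd by simp
      next
        case False
        then obtain y2 where y2: "y2 \<in> F" "dist x y2 = d x" "y2 \<noteq> y1" by blast
        define \<eta> where "\<eta> = - W2 1 \<rho> t"
        have eta: "0 < \<eta>" unfolding \<eta>_def using W2_neg[of t \<rho> 1] t by simp
        obtain \<delta>0 where d0: "0 < \<delta>0" "\<forall>s. \<bar>s - t\<bar> < \<delta>0 \<longrightarrow> W 1 \<rho> s \<le> W 1 \<rho> t + W1 1 \<rho> t*(s-t) + ((W2 1 \<rho> t + \<eta>)/2)*(s-t)^2"
          using taylor_up[of "t - 1" \<rho> "W 1 \<rho>" "W1 1 \<rho>" "W2 1 \<rho>" t \<eta>] W_d1 W_d2 t eta by auto
        show False
        proof (rule two_pt[OF xo y1 y2(1,2) y2(3)[symmetric], of "W1 1 \<rho> t" \<delta>0])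
          show "0 < W1 1 \<rho> t" using W1_pos t by simp
          show "0 < \<delta>0" by (rule d0(1))
          fix s assume s: "0 \<le> s" "s \<le> \<rho>" "\<bar>s - d x\<bar> < \<delta>0"
          have "f s = W 1 \<rho> s" using f_eq s by simp
          moreover have "f (d x) = W 1 \<rho> t" using f_eq t unfolding t_def by simp
          moreover have "W 1 \<rho> s \<le> W 1 \<rho> t + W1 1 \<rho> t*(s-t)" using d0(2) s unfolding t_def \<eta>_def by auto
          ultimately show "f s \<le> f (d x) + W1 1 \<rho> t * (s - d x)" unfolding t_def by simp
        qed
      qed
    qed
    then show "x \<in> high_ridge \<Omega>" unfolding high_ridge_def using xc by simp
  qed
  have hclosed: "closed (high_ridge \<Omega>)"
  proof -
    have "high_ridge \<Omega> = closure \<Omega> \<inter> {x. d x = \<rho>}" unfolding high_ridge_def by auto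
    moreover have "closed {x. d x = \<rho>}" by (intro closed_Collect_eq d_cont continuous_on_const)
    ultimately show ?thesis by auto
  qed
  have "cut_locus \<Omega> \<subseteq> high_ridge \<Omega>"
    unfolding cut_locus_def using sing hclosed closure_minimal by blast
  moreover have "high_ridge \<Omega> \<subseteq> cut_locus \<Omega>"
  proof
    fix x assume "x \<in> high_ridge \<Omega>"
    then have "x \<in> closure \<Omega>" "d x = \<rho>" unfolding high_ridge_def by auto
    then have "x \<in> singular_set \<Omega>" using ridge_sing unfolding singular_set_def by blast
    then show "x \<in> cut_locus \<Omega>" unfolding cut_locus_def using closure_subset by blast
  qed
  ultimately show ?thesis using part1 by blast
qed

end
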